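(* Consider the finite volume scheme $q_i^{n+1}=q_i^n-\frac{\Delta t}{\Delta x_i}\big(\mathcal F_l(q_i^n,q_{i+1}^n)-\mathcal F_r(q_{i-1}^n,q_i^n)\big)$ described in the context, with pseudo-conservative variable $q=(h,hu,h\sigma_{xx},h\sigma_{zz})$, with relaxation speeds $c_l,c_r$ chosen as in the context, under the CFL condition $\Delta t\,A(q_i^n,q_{i+1}^n)\le\frac12\min(\Delta x_i,\Delta x_{i+1})$ for all $i$. Then: (i) it is consistent with the system of the context for smooth solutions; (ii) it keeps the positivity of $h,\sigma_{xx},\sigma_{zz}$: if all $q_i^n$ have $h>0,\sigma_{xx}>0,\sigma_{zz}>0$, so do all $q_i^{n+1}$; (iii) it is conservative in the variables $h$ and $hu$ (the first two components of $\mathcal F_l(q_l,q_r)$ and $\mathcal F_r(q_l,q_r)$ coincide); (iv) it satisfies the discrete energy inequality: there exists a numerical energy flux $\mathcal G(q_l,q_r)$ with $\mathcal G(q,q)=G(q)$ such that $E(q_i^{n+1})-E(q_i^n)+\frac{\Delta t}{\Delta x_i}\big(\mathcal G(q_i^n,q_{i+1}^n)-\mathcal G(q_{i-1}^n,q_i^n)\big)\le0$ for all $i$; (v) it satisfies the maximum principle on $s_{xx}$ and the minimum principle on $s_{zz}$: if for a constant $k>0$ one has $s_{xx}(q_i^n)\le k$ for all $i$ (resp. $s_{zz}(q_i^n)\ge k$ for all $i$), then $s_{xx}(q_i^{n+1})\le k$ (resp. $s_{zz}(q_i^{n+1})\ge k$) for all $i$; (vi) steady contact discontinuities where $u=0$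 and $P$ is constant are exactly resolved: if $u_i^n=0$ for all $i$ and $P(q_i^n)$ does not depend on $i$, then $q_i^{n+1}=q_i^n$ for all $i$; (vii) data with bounded propagation speeds give finite numerical propagation speed: there is an absolute constant $C$ such that $A(q_l,q_r)\le C(|u_l|+|u_r|+a_l+a_r)$ for all states $q_l,q_r$; (viii) the numerical viscosity is sharp: as $q_l,q_r$ tend to a common state $q$, the speeds $\Sigma_1,\Sigma_2,\Sigma_3$ tend respectively to the exact characteristic speeds $u-\sqrt{\partial_hP|_{\boldsymbol s}},\ u,\ u+\sqrt{\partial_hP|_{\boldsymbol s}}$ evaluated at $q$.
   Context: We consider the one-dimensional system for $h\ge0$, velocity $u$, and $\sigma_{xx},\sigma_{zz}>0$: $\partial_t h+\partial_x(hu)=0$, $\partial_t(hu)+\partial_x(hu^2+P)=0$, $\partial_t(h\sigma_{xx})+\partial_x(h\sigma_{xx}u)-2h\sigma_{xx}\partial_xu=0$, $\partial_t(h\sigma_{zz})+\partial_x(h\sigma_{zz}u)+2h\sigma_{zz}\partial_xu=0$, with $P=g\frac{h^2}{2}+\frac{\eta_p}{2\lambda}h(\sigma_{zz}-\sigma_{xx})$, constants $g,\eta_p,\lambda>0$. States $q=(h,hu,h\sigma_{xx},h\sigma_{zz})$ with $h>0,\sigma_{xx}>0,\sigma_{zz}>0$. Set $\boldsymbol s=(s_{xx},s_{zz})=(\sigma_{xx}^{-1/2}/h,\ \sigma_{zz}^{1/2}/h)$; then $\partial_hP|_{\boldsymbol s}=gh+\frac{\eta_p}{2\lambda}(3\sigma_{zz}+\sigma_{xx})$.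 Energy $E(q)=h\frac{u^2}{2}+g\frac{h^2}{2}+\frac{\eta_p}{4\lambda}h(\sigma_{xx}+\sigma_{zz}-\ln(\sigma_{xx}\sigma_{zz})-2)$, energy flux $G(q)=(E+P)u$. Relaxation speeds: for states $q_l,q_r$, $P_l=P(q_l)$, $P_r=P(q_r)$, $a_l=\sqrt{\partial_hP|_{\boldsymbol s}(q_l)}$, $a_r=\sqrt{\partial_hP|_{\boldsymbol s}(q_r)}$, $\frac{c_l}{h_l}=a_l+2\big(\max(0,u_l-u_r)+\frac{\max(0,P_r-P_l)}{h_la_l+h_ra_r}\big)$, $\frac{c_r}{h_r}=a_r+2\big(\max(0,u_l-u_r)+\frac{\max(0,P_l-P_r)}{h_la_l+h_ra_r}\big)$. Riemann solver: $\pi_l=P_l$, $\pi_r=P_r$, $u^*=\frac{c_lu_l+c_ru_r+\pi_l-\pi_r}{c_l+c_r}$, $\pi^*=\frac{c_r\pi_l+c_l\pi_r-c_lc_r(u_r-u_l)}{c_l+c_r}$, $\frac1{h_l^*}=\frac1{h_l}+\frac{c_r(u_r-u_l)+\pi_l-\pi_r}{c_l(c_l+c_r)}$, $\frac1{h_r^*}=\frac1{h_r}+\frac{c_l(u_r-u_l)+\pi_r-\pi_l}{c_r(c_l+c_r)}$, $\sigma_{xx,l}^*=\sigma_{xx,l}(h_l/h_l^* )^2$, $\sigma_{xx,r}^*=\sigma_{xx,r}(h_r/h_r^* )^2$, $\sigma_{zz,l}^*=\sigma_{zz,l}(h_l^*/h_l)^2$, $\sigma_{zz,r}^*=\sigma_{zz,r}(h_r^*/h_r)^2$;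 $q_l^*=(h_l^*,h_l^*u^*,h_l^*\sigma_{xx,l}^*,h_l^*\sigma_{zz,l}^* )$, $q_r^*$ similarly; speeds $\Sigma_1=u_l-c_l/h_l$, $\Sigma_2=u^*$, $\Sigma_3=u_r+c_r/h_r$. The self-similar approximate solution equals $q_l$ (with $\pi=\pi_l$) for $\xi<\Sigma_1$, $q_l^*$ (with $\pi=\pi^*$) on $(\Sigma_1,\Sigma_2)$, $q_r^*$ (with $\pi=\pi^*$) on $(\Sigma_2,\Sigma_3)$, $q_r$ (with $\pi=\pi_r$) for $\xi>\Sigma_3$. Numerical fluxes: $\mathcal F_l=(\mathcal F^h,\mathcal F^{hu},\mathcal F_l^{h\sigma_{xx}},\mathcal F_l^{h\sigma_{zz}})$, $\mathcal F_r=(\mathcal F^h,\mathcal F^{hu},\mathcal F_r^{h\sigma_{xx}},\mathcal F_r^{h\sigma_{zz}})$, where $\mathcal F^h=hu$ and $\mathcal F^{hu}=hu^2+\pi$ evaluated in the self-similar solution at $\xi=0$; and, for $w=h\sigma_{xx}$ (resp. $w=h\sigma_{zz}$), $\mathcal F_l^{w}=(wu)_l+\min(0,\Sigma_1)(w_l^*-w_l)+\min(0,\Sigma_2)(w_r^*-w_l^* )+\min(0,\Sigma_3)(w_r-w_r^* )$ and $\mathcal F_r^{w}=(wu)_r-\max(0,\Sigma_1)(w_l^*-w_l)-\max(0,\Sigma_2)(w_r^*-w_l^* )-\max(0,\Sigma_3)(w_r-w_r^* )$. Mesh: cells $(x_{i-1/2},x_{i+1/2})$, $i\in\mathbb Z$,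 $\Delta x_i=x_{i+1/2}-x_{i-1/2}$, time step $\Delta t$; $A(q_l,q_r)=\max(|\Sigma_1|,|\Sigma_2|,|\Sigma_3|)$. *)

theory Defs
  imports "HOL-Analysis.Analysis"
begin

text \<open>States q = (h, hu, h sigma_xx, h sigma_zz).  Physical constants g, eta_p, lambda
  are passed explicitly as the parameters g eta lam.\<close>

type_synonym state = "real \<times> real \<times> real \<times> real"

definition hh :: "state \<Rightarrow> real" where "hh q = fst q"
definition hu :: "state \<Rightarrow> real" where "hu q = fst (snd q)"
definition hsxx :: "state \<Rightarrow> real" where "hsxx q = fst (snd (snd q))"
definition hszz :: "state \<Rightarrow> real" where "hszz q = snd (snd (snd q))"

definition vel :: "state \<Rightarrow> real" where "vel q = hu q / hh q"
definition sigxx :: "state \<Rightarrow> real" where "sigxx q = hsxx q / hh q"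
definition sigzz :: "state \<Rightarrow> real" where "sigzz q = hszz q / hh q"

definition admissible :: "state \<Rightarrow> bool" where
  "admissible q \<longleftrightarrow> hh q > 0 \<and> sigxx q > 0 \<and> sigzz q > 0"

definition pres :: "real \<Rightarrow> real \<Rightarrow> real \<Rightarrow> state \<Rightarrow> real" where
  "pres g eta lam q = g * hh q ^ 2 / 2 + eta / (2 * lam) * hh q * (sigzz q - sigxx q)"

text \<open>partial_h P at fixed s = (s_xx, s_zz)\<close>
definition dPdh :: "real \<Rightarrow> real \<Rightarrow> real \<Rightarrow> state \<Rightarrow> real" where
  "dPdh g eta lam q = g * hh q + eta / (2 * lam) * (3 * sigzz q + sigxx q)"

definition sound :: "real \<Rightarrow> real \<Rightarrow> real \<Rightarrow> state \<Rightarrow> real" where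
  "sound g eta lam q = sqrt (dPdh g eta lam q)"

definition s_xx :: "state \<Rightarrow> real" where "s_xx q = 1 / (sqrt (sigxx q) * hh q)"
definition s_zz :: "state \<Rightarrow> real" where "s_zz q = sqrt (sigzz q) / hh q"

definition energy :: "real \<Rightarrow> real \<Rightarrow> real \<Rightarrow> state \<Rightarrow> real" where
  "energy g eta lam q = hh q * vel q ^ 2 / 2 + g * hh q ^ 2 / 2
     + eta / (4 * lam) * hh q * (sigxx q + sigzz q - ln (sigxx q * sigzz q) - 2)"

definition energy_flux :: "real \<Rightarrow> real \<Rightarrow> real \<Rightarrow> state \<Rightarrow> real" where
  "energy_flux g eta lam q = (energy g eta lam q + pres g eta lam q) * vel q"

definition cL :: "real \<Rightarrow> real \<Rightarrow> real \<Rightarrow> state \<Rightarrow> state \<Rightarrow> real" where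
  "cL g eta lam ql qr = hh ql * (sound g eta lam ql
     + 2 * (max 0 (vel ql - vel qr)
            + max 0 (pres g eta lam qr - pres g eta lam ql)
              / (hh ql * sound g eta lam ql + hh qr * sound g eta lam qr)))"

definition cR :: "real \<Rightarrow> real \<Rightarrow> real \<Rightarrow> state \<Rightarrow> state \<Rightarrow> real" where
  "cR g eta lam ql qr = hh qr * (sound g eta lam qr
     + 2 * (max 0 (vel ql - vel qr)
            + max 0 (pres g eta lam ql - pres g eta lam qr)
              / (hh ql * sound g eta lam ql + hh qr * sound g eta lam qr)))"

definition ustar :: "real \<Rightarrow> real \<Rightarrow> real \<Rightarrow> state \<Rightarrow> state \<Rightarrow> real" where
  "ustar g eta lam ql qr =
     (let cl = cL g eta lam ql qr; cr = cR g eta lam ql qr in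
      (cl * vel ql + cr * vel qr + pres g eta lam ql - pres g eta lam qr) / (cl + cr))"

definition pistar :: "real \<Rightarrow> real \<Rightarrow> real \<Rightarrow> state \<Rightarrow> state \<Rightarrow> real" where
  "pistar g eta lam ql qr =
     (let cl = cL g eta lam ql qr; cr = cR g eta lam ql qr in
      (cr * pres g eta lam ql + cl * pres g eta lam qr - cl * cr * (vel qr - vel ql)) / (cl + cr))"

definition hLstar :: "real \<Rightarrow> real \<Rightarrow> real \<Rightarrow> state \<Rightarrow> state \<Rightarrow> real" where
  "hLstar g eta lam ql qr =
     (let cl = cL g eta lam ql qr; cr = cR g eta lam ql qr in
      1 / (1 / hh ql + (cr * (vel qr - vel ql) + pres g eta lam ql - pres g eta lam qr)
                       / (cl * (cl + cr))))"

definition hRstar :: "real \<Rightarrow> real \<Rightarrow> real \<Rightarrow> state \<Rightarrow> state \<Rightarrow> real" where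
  "hRstar g eta lam ql qr =
     (let cl = cL g eta lam ql qr; cr = cR g eta lam ql qr in
      1 / (1 / hh qr + (cl * (vel qr - vel ql) + pres g eta lam qr - pres g eta lam ql)
                       / (cr * (cl + cr))))"

definition qLstar :: "real \<Rightarrow> real \<Rightarrow> real \<Rightarrow> state \<Rightarrow> state \<Rightarrow> state" where
  "qLstar g eta lam ql qr =
     (let hs = hLstar g eta lam ql qr; us = ustar g eta lam ql qr in
      (hs, hs * us, hs * (sigxx ql * (hh ql / hs) ^ 2), hs * (sigzz ql * (hs / hh ql) ^ 2)))"

definition qRstar :: "real \<Rightarrow> real \<Rightarrow> real \<Rightarrow> state \<Rightarrow> state \<Rightarrow> state" where
  "qRstar g eta lam ql qr =
     (let hs = hRstar g eta lam ql qr; us = ustar g eta lam ql qr in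
      (hs, hs * us, hs * (sigxx qr * (hh qr / hs) ^ 2), hs * (sigzz qr * (hs / hh qr) ^ 2)))"

definition Sig1 :: "real \<Rightarrow> real \<Rightarrow> real \<Rightarrow> state \<Rightarrow> state \<Rightarrow> real" where
  "Sig1 g eta lam ql qr = vel ql - cL g eta lam ql qr / hh ql"
definition Sig2 :: "real \<Rightarrow> real \<Rightarrow> real \<Rightarrow> state \<Rightarrow> state \<Rightarrow> real" where
  "Sig2 g eta lam ql qr = ustar g eta lam ql qr"
definition Sig3 :: "real \<Rightarrow> real \<Rightarrow> real \<Rightarrow> state \<Rightarrow> state \<Rightarrow> real" where
  "Sig3 g eta lam ql qr = vel qr + cR g eta lam ql qr / hh qr"

text \<open>Value (state, pi) of the self-similar approximate solution at xi = 0.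
  At a wave of speed exactly 0 the state on its right is taken (the conservative
  fluxes h u and h u^2 + pi coincide on both sides there).\<close>
definition riem0 :: "real \<Rightarrow> real \<Rightarrow> real \<Rightarrow> state \<Rightarrow> state \<Rightarrow> state \<times> real" where
  "riem0 g eta lam ql qr =
     (if 0 < Sig1 g eta lam ql qr then (ql, pres g eta lam ql)
      else if 0 < Sig2 g eta lam ql qr then (qLstar g eta lam ql qr, pistar g eta lam ql qr)
      else if 0 < Sig3 g eta lam ql qr then (qRstar g eta lam ql qr, pistar g eta lam ql qr)
      else (qr, pres g eta lam qr))"

definition fluxH :: "real \<Rightarrow> real \<Rightarrow> real \<Rightarrow> state \<Rightarrow> state \<Rightarrow> real" where
  "fluxH g eta lam ql qr = hu (fst (riem0 g eta lam ql qr))"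

definition fluxHU :: "real \<Rightarrow> real \<Rightarrow> real \<Rightarrow> state \<Rightarrow> state \<Rightarrow> real" where
  "fluxHU g eta lam ql qr =
     (let (q0, p0) = riem0 g eta lam ql qr in hu q0 * vel q0 + p0)"

definition fluxLw :: "(state \<Rightarrow> real) \<Rightarrow> real \<Rightarrow> real \<Rightarrow> real \<Rightarrow> state \<Rightarrow> state \<Rightarrow> real" where
  "fluxLw w g eta lam ql qr =
     (let s1 = Sig1 g eta lam ql qr; s2 = Sig2 g eta lam ql qr; s3 = Sig3 g eta lam ql qr;
          qls = qLstar g eta lam ql qr; qrs = qRstar g eta lam ql qr in
      w ql * vel ql + min 0 s1 * (w qls - w ql) + min 0 s2 * (w qrs - w qls)
        + min 0 s3 * (w qr - w qrs))"

definition fluxRw :: "(state \<Rightarrow> real) \<Rightarrow> real \<Rightarrow> real \<Rightarrow> real \<Rightarrow> state \<Rightarrow> state \<Rightarrow> real" where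
  "fluxRw w g eta lam ql qr =
     (let s1 = Sig1 g eta lam ql qr; s2 = Sig2 g eta lam ql qr; s3 = Sig3 g eta lam ql qr;
          qls = qLstar g eta lam ql qr; qrs = qRstar g eta lam ql qr in
      w qr * vel qr - max 0 s1 * (w qls - w ql) - max 0 s2 * (w qrs - w qls)
        - max 0 s3 * (w qr - w qrs))"

definition fluxL :: "real \<Rightarrow> real \<Rightarrow> real \<Rightarrow> state \<Rightarrow> state \<Rightarrow> state" where
  "fluxL g eta lam ql qr = (fluxH g eta lam ql qr, fluxHU g eta lam ql qr,
      fluxLw hsxx g eta lam ql qr, fluxLw hszz g eta lam ql qr)"

definition fluxR :: "real \<Rightarrow> real \<Rightarrow> real \<Rightarrow> state \<Rightarrow> state \<Rightarrow> state" where
  "fluxR g eta lam ql qr = (fluxH g eta lam ql qr, fluxHU g eta lam ql qr,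
      fluxRw hsxx g eta lam ql qr, fluxRw hszz g eta lam ql qr)"

definition Amax :: "real \<Rightarrow> real \<Rightarrow> real \<Rightarrow> state \<Rightarrow> state \<Rightarrow> real" where
  "Amax g eta lam ql qr =
     max \<bar>Sig1 g eta lam ql qr\<bar> (max \<bar>Sig2 g eta lam ql qr\<bar> \<bar>Sig3 g eta lam ql qr\<bar>)"

text \<open>System written as  dt q + dx F(q) + B(q) dx q = 0  with
  F(q) = (hu, hu^2 + P, h sigma_xx u, h sigma_zz u) and
  B(q) dq = (0, 0, -2 h sigma_xx du, 2 h sigma_zz du), du = (d(hu) - u dh)/h.\<close>
definition phys_flux :: "real \<Rightarrow> real \<Rightarrow> real \<Rightarrow> state \<Rightarrow> state" where
  "phys_flux g eta lam q = (hu q, hu q * vel q + pres g eta lam q, hsxx q * vel q, hszz q * vel q)"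

definition ncB :: "state \<Rightarrow> state \<Rightarrow> state" where
  "ncB q dq = (let du = (hu dq - vel q * hh dq) / hh q in
               (0, 0, -2 * hsxx q * du, 2 * hszz q * du))"

definition scheme_step :: "real \<Rightarrow> real \<Rightarrow> real \<Rightarrow> (int \<Rightarrow> real) \<Rightarrow> real \<Rightarrow> (int \<Rightarrow> state) \<Rightarrow> int \<Rightarrow> state" where
  "scheme_step g eta lam dx dt q i =
     q i - (dt / dx i) *\<^sub>R (fluxL g eta lam (q i) (q (i + 1)) - fluxR g eta lam (q (i - 1)) (q i))"

definition CFL :: "real \<Rightarrow> real \<Rightarrow> real \<Rightarrow> (int \<Rightarrow> real) \<Rightarrow> real \<Rightarrow> (int \<Rightarrow> state) \<Rightarrow> bool" where
  "CFL g eta lam dx dt q \<longleftrightarrow>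
     (\<forall>i. dt * Amax g eta lam (q i) (q (i + 1)) \<le> min (dx i) (dx (i + 1)) / 2)"

definition step_setting :: "real \<Rightarrow> real \<Rightarrow> real \<Rightarrow> (int \<Rightarrow> real) \<Rightarrow> real \<Rightarrow> (int \<Rightarrow> state) \<Rightarrow> bool" where
  "step_setting g eta lam dx dt q \<longleftrightarrow>
     (\<forall>i. dx i > 0) \<and> dt > 0 \<and> (\<forall>i. admissible (q i)) \<and> CFL g eta lam dx dt q"

end

theory Submission
  imports Defs
begin

lemma speed_core:
  fixes hl hr al ar ul ur Pl Pr :: real
  assumes pos: "hl>0" "hr>0" "al>0" "ar>0"
  defines "E0 \<equiv> hl*al+hr*ar"
  defines "Zl \<equiv> max 0 (ul-ur) + max 0 (Pr-Pl)/E0"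
  defines "Zr \<equiv> max 0 (ul-ur) + max 0 (Pl-Pr)/E0"
  defines "cl \<equiv> hl*(al+2*Zl)" and "cr \<equiv> hr*(ar+2*Zr)"
  defines "us \<equiv> (cl*ul + cr*ur + Pl - Pr)/(cl+cr)"
  shows "Zl \<ge> 0" "Zr \<ge> 0" "cl \<ge> hl*al" "cr \<ge> hr*ar" "cl > 0" "cr > 0"
    "ul - us \<le> Zl" "us - ur \<le> Zr"
proof -
  have E0: "E0 > 0" using pos unfolding E0_def by (simp add: add_pos_pos)
  show Z1: "Zl \<ge> 0" "Zr \<ge> 0" unfolding Zl_def Zr_def using E0 by auto
  show c1: "cl \<ge> hl*al" "cr \<ge> hr*ar" unfolding cl_def cr_def using Z1 pos
    by (simp_all add: algebra_simps)
  show c2: "cl > 0" "cr > 0" using c1 pos by (smt (verit) mult_pos_pos)+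
  have sum: "cl + cr \<ge> E0" using c1 unfolding E0_def by simp
  have "ul - us = (cr*(ul-ur) + (Pr - Pl))/(cl+cr)"
    unfolding us_def using c2 by (simp add: field_simps)
  also have "\<dots> \<le> (cr*max 0 (ul-ur) + max 0 (Pr-Pl))/(cl+cr)"
    using c2 by (intro divide_right_mono add_mono mult_left_mono) auto
  also have "\<dots> = cr/(cl+cr)*max 0 (ul-ur) + max 0 (Pr-Pl)/(cl+cr)"
    by (simp add: add_divide_distrib)
  also have "\<dots> \<le> 1*max 0 (ul-ur) + max 0 (Pr-Pl)/E0"
    using c2 E0 sum by (intro add_mono mult_right_mono divide_left_mono) auto
  finally show "ul - us \<le> Zl" unfolding Zl_def by simp
  have "us - ur = (cl*(ul-ur) + (Pl - Pr))/(cl+cr)"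
    unfolding us_def using c2 by (simp add: field_simps)
  also have "\<dots> \<le> (cl*max 0 (ul-ur) + max 0 (Pl-Pr))/(cl+cr)"
    using c2 by (intro divide_right_mono add_mono mult_left_mono) auto
  also have "\<dots> = cl/(cl+cr)*max 0 (ul-ur) + max 0 (Pl-Pr)/(cl+cr)"
    by (simp add: add_divide_distrib)
  also have "\<dots> \<le> 1*max 0 (ul-ur) + max 0 (Pl-Pr)/E0"
    using c2 E0 sum by (intro add_mono mult_right_mono divide_left_mono) auto
  finally show "us - ur \<le> Zr" unfolding Zr_def by simp
qed


lemma lin_helper: fixes c a m p x y :: real shows "c = a + 2*(m + p) \<Longrightarrow> p \<le> x \<Longrightarrow> m \<le> y \<Longrightarrow> c \<le> a + 2*y + 2*x"
  by (smt (verit))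
lemma abs_helper1: fixes C a b u v :: real
  shows "0 < C \<Longrightarrow> C \<le> a + 2*(\<bar>u\<bar>+\<bar>v\<bar>) + 2*(a+b) \<Longrightarrow> 0 < a \<Longrightarrow> 0 < b \<Longrightarrow> \<bar>u - C\<bar> \<le> 3*(\<bar>u\<bar>+\<bar>v\<bar>+a+b)"
  by (simp add: abs_le_iff) linarith
lemma abs_helper3: fixes C a b u v :: real
  shows "0 < C \<Longrightarrow> C \<le> b + 2*(\<bar>u\<bar>+\<bar>v\<bar>) + 2*(a+b) \<Longrightarrow> 0 < a \<Longrightarrow> 0 < b \<Longrightarrow> \<bar>v + C\<bar> \<le> 3*(\<bar>u\<bar>+\<bar>v\<bar>+a+b)"
  by (simp add: abs_le_iff) linarith

lemma sq_bracket:
  fixes d A B :: real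
  assumes "A \<le> B" shows "d^2 * A \<le> d^2 * B"
  using assms by (simp add: mult_left_mono)

lemma g_part:
  fixes h hs :: real assumes h: "h > 0" and hs: "hs > 0"
  shows "(hs - h)/2 + h^2/2*(1/hs - 1/h) \<le> (max h hs)^3 * (1/hs - 1/h)^2/2"
proof -
  define m where "m = max h hs"
  have m: "h \<le> m" "hs \<le> m" "m > 0" using h hs unfolding m_def by auto
  have e1: "(hs - h)/2 + h^2/2*(1/hs - 1/h) = (hs - h)^2 * (1/(2*hs))"
    using h hs by (simp add: field_simps power2_eq_square)
  have e2: "m^3 * (1/hs - 1/h)^2/2 = (hs - h)^2 * (m^3/(2*h^2*hs^2))"
    using h hs by (simp add: field_simps power2_eq_square)
  have "h^2 * hs \<le> m^3"
  proof -
    have "h^2 * hs \<le> m^2 * m" using m h hs by (intro mult_mono power_mono) auto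
    then show ?thesis by (simp add: power3_eq_cube power2_eq_square)
  qed
  then have "(h^2*hs) / (2*h^2*hs^2) \<le> m^3 / (2*h^2*hs^2)"
    using h hs by (intro divide_right_mono) auto
  moreover have "(h^2*hs) / (2*h^2*hs^2) = 1/(2*hs)" using h hs by (simp add: field_simps power2_eq_square)
  ultimately have "1/(2*hs) \<le> m^3/(2*h^2*hs^2)" by simp
  then show ?thesis unfolding e1 m_def[symmetric] e2 by (rule sq_bracket)
qed

lemma x_part:
  fixes h hs sx :: real assumes h: "h > 0" and hs: "hs > 0"
  shows "sx*(h/hs)^2 - sx - 2*h* sx*(1/hs - 1/h) = sx*h^2*(1/hs - 1/h)^2"
  using h hs by (simp add: field_simps power2_eq_square)

lemma z_part:
  fixes h hs :: real assumes h: "h > 0" and hs: "hs > 0"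
  shows "(hs/h)^2 - 1 + 2*h*(1/hs - 1/h) \<le> 3*(max h hs)^4/h^2*(1/hs - 1/h)^2"
proof -
  define m where "m = max h hs"
  have m: "h \<le> m" "hs \<le> m" "m > 0" using h hs unfolding m_def by auto
  have e1: "(hs/h)^2 - 1 + 2*h*(1/hs - 1/h) = (hs - h)^2 * ((hs + 2*h)/(h^2*hs))"
    using h hs by (simp add: field_simps power2_eq_square)
  have e2: "3*m^4/h^2*(1/hs - 1/h)^2 = (hs - h)^2 * (3*m^4/(h^4*hs^2))"
    using h hs by (simp add: field_simps power2_eq_square power4_eq_xxxx)
  have "(hs + 2*h) * h^2 * hs \<le> 3*m^4"
  proof -
    have a: "hs + 2*h \<le> 3*m" using m by simp
    have b: "h^2 * hs \<le> m^2 * m" using m h hs by (intro mult_mono power_mono) auto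
    have "(hs + 2*h) * (h^2 * hs) \<le> (3*m) * (m^2*m)"
      using a b h hs m by (intro mult_mono) auto
    then show ?thesis by (simp add: power2_eq_square power4_eq_xxxx algebra_simps)
  qed
  then have "((hs + 2*h) * h^2 * hs) / (h^4*hs^2) \<le> 3*m^4 / (h^4*hs^2)"
    using h hs by (intro divide_right_mono) auto
  moreover have "((hs + 2*h) * h^2 * hs) / (h^4*hs^2) = (hs + 2*h)/(h^2*hs)"
    using h hs by (simp add: field_simps power2_eq_square power4_eq_xxxx)
  ultimately have "(hs + 2*h)/(h^2*hs) \<le> 3*m^4/(h^4*hs^2)" by simp
  then show ?thesis unfolding e1 m_def[symmetric] e2 by (rule sq_bracket)
qed

lemma speed_M:
  fixes g K2 h hs a Z c sx sz :: real
  assumes pos: "g > 0" "K2 > 0" "h > 0" "hs > 0" "a > 0" "Z \<ge> 0" "sx > 0" "sz > 0"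
    and c: "c = h*(a + 2*Z)" and hsb: "1/hs \<ge> 1/h - Z/c"
    and a2: "a^2 = g*h + 2*K2*(3* sz + sx)"
  shows "g*(max h hs)^3 + 6*K2* sz*(max h hs)^4/h^2 + 2*K2* sx*h^2 \<le> c^2"
proof (cases "hs \<le> h")
  case True
  then have "max h hs = h" by simp
  then have "g*(max h hs)^3 + 6*K2* sz*(max h hs)^4/h^2 + 2*K2* sx*h^2 = h^2 * a^2"
    using pos(3) unfolding a2 by (simp add: field_simps power2_eq_square power3_eq_cube power4_eq_xxxx)
  also have "\<dots> \<le> c^2"
  proof -
    have "h*a \<le> c" using c pos by (simp add: algebra_simps)
    then have "(h*a)^2 \<le> c^2" using pos by (intro power_mono) auto
    then show ?thesis by (simp add: power_mult_distrib)
  qed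
  finally show ?thesis .
next
  case False
  then have mx: "max h hs = hs" and hl: "h < hs" by auto
  define r where "r = hs / h"
  have r1: "r \<ge> 1" using hl pos unfolding r_def by simp
  have hsr: "hs = r*h" unfolding r_def using pos by simp
  have cp: "c > 0" using c pos by (simp add: add_pos_nonneg)
  have "1/h = (a+2*Z)/c" using c pos cp by (simp add: field_simps)
  then have "1/h - Z/c = (a+2*Z - Z)/c" by (metis diff_divide_distrib)
  then have "1/h - Z/c = (a+Z)/c" by simp
  then have "(a+Z)/c \<le> 1/hs" using hsb by simp
  then have "(a+Z)/c * (c*hs) \<le> 1/hs * (c*hs)" using pos cp by (intro mult_right_mono) auto
  then have hz: "(a+Z)*hs \<le> c" using pos cp by simp
  have "r \<le> (a+2*Z)/(a+Z)" unfolding r_def using hz pos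
    by (simp add: divide_le_eq le_divide_eq c algebra_simps add_pos_nonneg)
  then have rr: "r^2 \<le> ((a+2*Z)/(a+Z))^2" using r1 by (intro power_mono) auto
  have key: "r^2 * a \<le> a + 2*Z"
  proof -
    have "r^2 * a \<le> ((a+2*Z)/(a+Z))^2 * a" using rr pos by (intro mult_right_mono) auto
    also have "\<dots> = (a+2*Z) * ((a+2*Z)*a / (a+Z)^2)" using pos by (simp add: field_simps power2_eq_square)
    also have "\<dots> \<le> (a+2*Z) * 1"
    proof -
      have "(a+2*Z)*a \<le> (a+Z)^2" using pos by (simp add: power2_eq_square algebra_simps)
      then have "(a+2*Z)*a / (a+Z)^2 \<le> 1" using pos by (simp add: divide_le_eq_1)
      then show ?thesis using pos by (intro mult_left_mono) auto
    qed
    finally show ?thesis by simp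
  qed
  have t1: "g * hs^3 \<le> r^4 * (g*h^3)"
  proof -
    have "r^3 \<le> r^4" using r1 by (simp add: power_increasing)
    then have "g*h^3*r^3 \<le> g*h^3*r^4" using pos by (intro mult_left_mono) auto
    then show ?thesis unfolding hsr by (simp add: power_mult_distrib algebra_simps)
  qed
  have t2: "6*K2* sz*hs^4/h^2 = r^4 * (6*K2* sz*h^2)"
    unfolding hsr using pos by (simp add: field_simps power2_eq_square power4_eq_xxxx)
  have t3: "2*K2* sx*h^2 \<le> r^4 * (2*K2* sx*h^2)"
  proof -
    have "1 \<le> r^4" using r1 by (simp add: one_le_power)
    then have "1 * (2*K2* sx*h^2) \<le> r^4 * (2*K2* sx*h^2)" using pos by (intro mult_right_mono) auto
    then show ?thesis by simp
  qed
  have "g*(max h hs)^3 + 6*K2* sz*(max h hs)^4/h^2 + 2*K2* sx*h^2 \<le> r^4 * (g*h^3 + 6*K2* sz*h^2 + 2*K2* sx*h^2)"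
    unfolding mx using t1 t2 t3 by (simp add: algebra_simps)
  also have "\<dots> = h^2 * (r^2*a)^2"
    unfolding a2 power_mult_distrib using pos by (simp add: algebra_simps power2_eq_square power3_eq_cube power4_eq_xxxx)
  also have "\<dots> \<le> h^2 * (a+2*Z)^2"
    using key pos by (intro mult_left_mono power_mono) auto
  also have "\<dots> = c^2" unfolding c by (simp add: power_mult_distrib)
  finally show ?thesis .
qed

lemma wave_diss:
  fixes g K2 h hs u us S c sx sz L :: real
  assumes pos: "g>0" "K2>0" "h>0" "hs>0" "c>0" "sx>0" "sz>0"
    and c1: "c = h*(u - S)" and c2: "c = hs*(us - S)"
    and M: "g*(max h hs)^3 + 6*K2* sz*(max h hs)^4/h^2 + 2*K2* sx*h^2 \<le> c^2"
  shows "((hs*us^2/2 + g*hs^2/2 + K2*hs*(sx*(h/hs)^2 + sz*(hs/h)^2 - L - 2)) + (g*h^2/2 + 2*K2*h*(sz - sx) - c*(us - u)))*us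
   - ((h*u^2/2 + g*h^2/2 + K2*h*(sx + sz - L - 2)) + (g*h^2/2 + 2*K2*h*(sz - sx)))*u
   - S*((hs*us^2/2 + g*hs^2/2 + K2*hs*(sx*(h/hs)^2 + sz*(hs/h)^2 - L - 2)) - (h*u^2/2 + g*h^2/2 + K2*h*(sx + sz - L - 2))) \<le> 0"
proof -
  define P where "P = g*h^2/2 + 2*K2*h*(sz - sx)"
  define e where "e = g*h/2 + K2*(sx + sz - L - 2)"
  define es where "es = g*hs/2 + K2*(sx*(h/hs)^2 + sz*(hs/h)^2 - L - 2)"
  define d where "d = 1/hs - 1/h"
  define A where "A = us - u"
  define m where "m = max h hs"
  have E: "h*u^2/2 + g*h^2/2 + K2*h*(sx + sz - L - 2) = h*(u^2/2 + e)"
    unfolding e_def by (simp add: algebra_simps power2_eq_square)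
  have Es: "hs*us^2/2 + g*hs^2/2 + K2*hs*(sx*(h/hs)^2 + sz*(hs/h)^2 - L - 2) = hs*(us^2/2 + es)"
    unfolding es_def by (simp add: algebra_simps power2_eq_square)
  have u1: "h*(u - S) = c" using c1 by simp
  have u2: "hs*(us - S) = c" using c2 by simp
  have Ad: "A = c*d"
  proof -
    have "us - S = c/hs" using u2 pos by (simp add: field_simps)
    moreover have "u - S = c/h" using u1 pos by (simp add: field_simps)
    ultimately have "A = c/hs - c/h" unfolding A_def by linarith
    then show ?thesis unfolding d_def by (simp add: algebra_simps)
  qed
  have LHS: "(hs*(us^2/2 + es) + (P - c*A))*us - (h*(u^2/2 + e) + P)*u - S*(hs*(us^2/2 + es) - h*(u^2/2 + e))
      = c*(es - e) - c*A^2/2 + P*A"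
  proof -
    have "(hs*(us^2/2 + es) + (P - c*A))*us - (h*(u^2/2 + e) + P)*u - S*(hs*(us^2/2 + es) - h*(u^2/2 + e))
        = (hs*(us - S))*(us^2/2 + es) - (h*(u - S))*(u^2/2 + e) + P*(us - u) - c*A*us"
      by (simp add: field_simps power2_eq_square)
    also have "\<dots> = c*(us^2/2 + es) - c*(u^2/2 + e) + P*A - c*A*us" unfolding u1 u2 A_def by simp
    also have "\<dots> = c*(es - e) - c*A^2/2 + P*A" unfolding A_def by (simp add: field_simps power2_eq_square)
    finally show ?thesis .
  qed
  have split: "es - e + P*d = g*((hs - h)/2 + h^2/2*d) + K2*(sx*(h/hs)^2 - sx - 2*h* sx*d)
      + K2* sz*((hs/h)^2 - 1 + 2*h*d)"
    unfolding es_def e_def P_def by (simp add: field_simps)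
  have b1: "g*((hs - h)/2 + h^2/2*d) \<le> g*(m^3*d^2/2)"
    using g_part[OF pos(3,4)] pos(1) unfolding d_def m_def by (intro mult_left_mono) auto
  have b2: "K2*(sx*(h/hs)^2 - sx - 2*h* sx*d) = K2*(sx*h^2*d^2)"
    using x_part[OF pos(3,4)] unfolding d_def by simp
  have b3: "K2* sz*((hs/h)^2 - 1 + 2*h*d) \<le> K2* sz*(3*m^4/h^2*d^2)"
    using z_part[OF pos(3,4)] pos(2,7) unfolding d_def m_def by (intro mult_left_mono) auto
  have "es - e + P*d \<le> g*(m^3*d^2/2) + K2*(sx*h^2*d^2) + K2* sz*(3*m^4/h^2*d^2)"
    unfolding split using add_mono[OF add_mono[OF b1 eq_refl[OF b2]] b3] .
  also have "\<dots> = (g*m^3 + 6*K2* sz*m^4/h^2 + 2*K2* sx*h^2) * d^2 / 2"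
    using pos by (simp add: field_simps)
  also have "\<dots> \<le> c^2 * d^2 / 2"
    using M unfolding m_def[symmetric] by (intro divide_right_mono mult_right_mono) auto
  finally have key: "es - e + P*d - c^2*d^2/2 \<le> 0" by simp
  have "c*(es - e) - c*A^2/2 + P*A = c * (es - e + P*d - c^2*d^2/2)"
    unfolding Ad by (simp add: algebra_simps power2_eq_square)
  also have "\<dots> \<le> 0" using key pos(5) by (simp add: mult_nonneg_nonpos)
  finally have fin: "c*(es - e) - c*A^2/2 + P*A \<le> 0" .
  show ?thesis unfolding E Es P_def[symmetric] A_def[symmetric] using LHS fin by simp
qed

lemma wave_diss2:
  fixes g K2 h hs u us S c sx sz Es E P pis :: real
  assumes pos: "g>0" "K2>0" "h>0" "hs>0" "c>0" "sx>0" "sz>0"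
    and c1: "c = h*(u - S)" and c2: "c = hs*(us - S)"
    and M: "g*(max h hs)^3 + 6*K2* sz*(max h hs)^4/h^2 + 2*K2* sx*h^2 \<le> c^2"
    and Es: "Es = hs*us^2/2 + g*hs^2/2 + K2*hs*(sx*(h/hs)^2 + sz*(hs/h)^2 - ln (sx* sz) - 2)"
    and E: "E = h*u^2/2 + g*h^2/2 + K2*h*(sx + sz - ln (sx* sz) - 2)"
    and P: "P = g*h^2/2 + 2*K2*h*(sz - sx)"
    and pis: "pis = P - c*(us - u)"
  shows "(Es + pis)*us - (E + P)*u - S*(Es - E) \<le> 0"
  using wave_diss[OF pos c1 c2 M, of "ln (sx* sz)"] unfolding Es E pis P by simp

lemma support:
  fixes g K2 h u sx sz H U Sx Sz :: real
  assumes pos: "g \<ge> 0" "K2 \<ge> 0" "h>0" "sx>0" "sz>0" "H>0" "Sx>0" "Sz>0"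
  shows "H*U^2/2 + g*H^2/2 + K2*H*(Sx + Sz - ln (Sx*Sz) - 2)
    + (g*H - U^2/2 - K2*(ln Sx + ln Sz))*(h - H) + U*(h*u - H*U) + K2*(1 - 1/Sx)*(h* sx - H*Sx)
    + K2*(1 - 1/Sz)*(h* sz - H*Sz)
    \<le> h*u^2/2 + g*h^2/2 + K2*h*(sx + sz - ln (sx* sz) - 2)"
proof -
  have l1: "ln (sx* sz) = ln sx + ln sz" "ln (Sx*Sz) = ln Sx + ln Sz" using pos by (simp_all add: ln_mult)
  have lx: "ln sx - ln Sx \<le> sx/Sx - 1" using ln_le_minus_one[of "sx/Sx"] pos by (simp add: ln_div)
  have lz: "ln sz - ln Sz \<le> sz/Sz - 1" using ln_le_minus_one[of "sz/Sz"] pos by (simp add: ln_div)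
  have d: "(h*u^2/2 + g*h^2/2 + K2*h*(sx + sz - (ln sx + ln sz) - 2)) -
    (H*U^2/2 + g*H^2/2 + K2*H*(Sx + Sz - (ln Sx + ln Sz) - 2)
    + (g*H - U^2/2 - K2*(ln Sx + ln Sz))*(h - H) + U*(h*u - H*U) + K2*(1 - 1/Sx)*(h* sx - H*Sx)
    + K2*(1 - 1/Sz)*(h* sz - H*Sz))
    = h*(u-U)^2/2 + g*(h-H)^2/2 + K2*h*((sx/Sx - 1) - (ln sx - ln Sx)) + K2*h*((sz/Sz - 1) - (ln sz - ln Sz))"
    using pos by (simp add: field_simps power2_eq_square)
  have "0 \<le> h*(u-U)^2/2 + g*(h-H)^2/2 + K2*h*((sx/Sx - 1) - (ln sx - ln Sx)) + K2*h*((sz/Sz - 1) - (ln sz - ln Sz))"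
    using pos lx lz by (intro add_nonneg_nonneg mult_nonneg_nonneg) auto
  then show ?thesis unfolding l1 using d by linarith
qed



lemma lim_lin:
  fixes F :: "'a filter" and n d1 d2 d3 d4 c1 c2 c3 c4 :: "'a \<Rightarrow> real"
  assumes c: "(c1 \<longlongrightarrow> 0) F" "(c2 \<longlongrightarrow> 0) F" "(c3 \<longlongrightarrow> 0) F" "(c4 \<longlongrightarrow> 0) F"
    and d: "\<And>x. \<bar>d1 x\<bar> \<le> n x" "\<And>x. \<bar>d2 x\<bar> \<le> n x" "\<And>x. \<bar>d3 x\<bar> \<le> n x" "\<And>x. \<bar>d4 x\<bar> \<le> n x"
  shows "((\<lambda>x. (1 / n x) * (c1 x * d1 x + c2 x * d2 x + c3 x * d3 x + c4 x * d4 x)) \<longlongrightarrow> 0) F"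
proof -
  have b: "norm (d x / n x) \<le> 1" if "\<bar>d x\<bar> \<le> n x" for d :: "'a \<Rightarrow> real" and x
  proof (cases "n x = 0")
    case True then show ?thesis by simp
  next
    case False
    then have "n x > 0" using that by linarith
    then show ?thesis using that by (simp add: divide_le_eq_1 abs_div)
  qed
  have l: "((\<lambda>x. c x * (d x / n x)) \<longlongrightarrow> 0) F" if "(c \<longlongrightarrow> 0) F" "\<And>x. \<bar>d x\<bar> \<le> n x"
    for c d :: "'a \<Rightarrow> real"
    apply (rule lim_null_mult_right_bounded[OF that(1), where B=1])
    apply (rule always_eventually)
    using b that(2) by blast
  have "((\<lambda>x. c1 x * (d1 x / n x) + c2 x * (d2 x / n x) + c3 x * (d3 x / n x) + c4 x * (d4 x / n x)) \<longlongrightarrow> 0 + 0 + 0 + 0) F"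
    by (intro tendsto_add l c d)
  moreover have "(\<lambda>x. (1 / n x) * (c1 x * d1 x + c2 x * d2 x + c3 x * d3 x + c4 x * d4 x)) =
      (\<lambda>x. c1 x * (d1 x / n x) + c2 x * (d2 x / n x) + c3 x * (d3 x / n x) + c4 x * (d4 x / n x))"
    by (auto simp: add_divide_distrib)
  ultimately show ?thesis by simp
qed

lemma fd_gen:
  fixes hl hls hr hrs ul ur us S1 S3 c1 c2 sl sl' sr sr' :: real
  assumes "hl*(ul - S1) = c1" "hls*(us - S1) = c1" "hr*(S3 - ur) = c2" "hrs*(S3 - us) = c2"
  shows "(hr* sr*ur - (max 0 S1*(hls* sl' - hl* sl) + max 0 us*(hrs* sr' - hls* sl') + max 0 S3*(hr* sr - hrs* sr')))
       - (hl* sl*ul + (min 0 S1*(hls* sl' - hl* sl) + min 0 us*(hrs* sr' - hls* sl') + min 0 S3*(hr* sr - hrs* sr')))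
       = c1*(sl' - sl) + c2*(sr' - sr)"
proof -
  have mm: "\<And>x::real. max 0 x + min 0 x = x" by (simp add: min_def max_def)
  have "(hr* sr*ur - (max 0 S1*(hls* sl' - hl* sl) + max 0 us*(hrs* sr' - hls* sl') + max 0 S3*(hr* sr - hrs* sr')))
       - (hl* sl*ul + (min 0 S1*(hls* sl' - hl* sl) + min 0 us*(hrs* sr' - hls* sl') + min 0 S3*(hr* sr - hrs* sr')))
     = hr* sr*ur - hl* sl*ul - (max 0 S1 + min 0 S1)*(hls* sl' - hl* sl) - (max 0 us + min 0 us)*(hrs* sr' - hls* sl')
       - (max 0 S3 + min 0 S3)*(hr* sr - hrs* sr')" by (simp add: algebra_simps)
  also have "\<dots> = hr* sr*ur - hl* sl*ul - S1*(hls* sl' - hl* sl) - us*(hrs* sr' - hls* sl') - S3*(hr* sr - hrs* sr')"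
    unfolding mm ..
  also have "\<dots> = (hls*(us - S1))* sl' - (hl*(ul - S1))* sl + (hrs*(S3 - us))* sr' - (hr*(S3 - ur))* sr"
    by (simp add: algebra_simps)
  also have "\<dots> = c1*(sl' - sl) + c2*(sr' - sr)" unfolding assms by (simp add: algebra_simps)
  finally show ?thesis .
qed


lemma comp_le: fixes z :: state
  shows "\<bar>hh z\<bar> \<le> norm z" "\<bar>hu z\<bar> \<le> norm z" "\<bar>hsxx z\<bar> \<le> norm z" "\<bar>hszz z\<bar> \<le> norm z"
proof -
  have n1: "norm (fst x) \<le> norm x" "norm (snd x) \<le> norm x" for x :: "'a::real_normed_vector \<times> 'b::real_normed_vector"
    using norm_fst_le[of "fst x" "snd x"] norm_snd_le[of "snd x" "fst x"] by auto
  show "\<bar>hh z\<bar> \<le> norm z" unfolding hh_def using n1(1)[of z] by simp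
  show "\<bar>hu z\<bar> \<le> norm z" unfolding hu_def using n1(1)[of "snd z"] n1(2)[of z] by simp
  show "\<bar>hsxx z\<bar> \<le> norm z" unfolding hsxx_def using n1(1)[of "snd (snd z)"] n1(2)[of z] n1(2)[of "snd z"] by simp
  show "\<bar>hszz z\<bar> \<le> norm z" unfolding hszz_def using n1(2)[of "snd (snd z)"] n1(2)[of z] n1(2)[of "snd z"] by simp
qed

lemma comp_diff: fixes a b :: state
  shows "hh (a - b) = hh a - hh b" "hu (a - b) = hu a - hu b" "hsxx (a - b) = hsxx a - hsxx b" "hszz (a - b) = hszz a - hszz b"
  by (simp_all add: hh_def hu_def hsxx_def hszz_def)

locale pp = fixes g eta lam :: real assumes gp: "g>0" and ep: "eta>0" and lp: "lam>0"
begin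

abbreviation "KK \<equiv> eta/(2*lam)"

lemma KK_pos: "KK > 0" using ep lp by simp

lemma adm_h: "admissible q \<Longrightarrow> hh q > 0" by (simp add: admissible_def)
lemma adm_sx: "admissible q \<Longrightarrow> sigxx q > 0" by (simp add: admissible_def)
lemma adm_sz: "admissible q \<Longrightarrow> sigzz q > 0" by (simp add: admissible_def)
lemma adm_comp: assumes "admissible q"
  shows "hsxx q = hh q * sigxx q" "hszz q = hh q * sigzz q" "hu q = hh q * vel q"
  using adm_h[OF assms] by (simp_all add: sigxx_def sigzz_def vel_def)
lemma adm_pos: assumes "admissible q" shows "hsxx q > 0" "hszz q > 0"
  using adm_h[OF assms] adm_sx[OF assms] adm_sz[OF assms] adm_comp[OF assms] by simp_all

lemma dPdh_pos: assumes "admissible q" shows "dPdh g eta lam q > 0"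
proof -
  have "KK * (3 * sigzz q + sigxx q) > 0" using KK_pos adm_sx[OF assms] adm_sz[OF assms]
    by (intro mult_pos_pos) simp_all
  moreover have "g * hh q > 0" using gp adm_h[OF assms] by simp
  ultimately show ?thesis unfolding dPdh_def by linarith
qed
lemma sound_pos: "admissible q \<Longrightarrow> sound g eta lam q > 0"
  unfolding sound_def using dPdh_pos by simp
lemma sound_sq: "admissible q \<Longrightarrow> sound g eta lam q ^ 2 = dPdh g eta lam q"
  unfolding sound_def using dPdh_pos by (simp add: less_imp_le)

lemma rs_speed:
  assumes "admissible ql" "admissible qr"
  shows "cL g eta lam ql qr > 0" "cR g eta lam ql qr > 0"
    "cL g eta lam ql qr \<ge> hh ql * sound g eta lam ql"
    "cR g eta lam ql qr \<ge> hh qr * sound g eta lam qr"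
    "\<exists>Z. Z \<ge> 0 \<and> cL g eta lam ql qr = hh ql*(sound g eta lam ql + 2*Z) \<and> vel ql - ustar g eta lam ql qr \<le> Z"
    "\<exists>Z. Z \<ge> 0 \<and> cR g eta lam ql qr = hh qr*(sound g eta lam qr + 2*Z) \<and> ustar g eta lam ql qr - vel qr \<le> Z"
proof -
  note sc = speed_core[OF adm_h[OF assms(1)] adm_h[OF assms(2)] sound_pos[OF assms(1)] sound_pos[OF assms(2)],
      where ul="vel ql" and ur="vel qr" and Pl="pres g eta lam ql" and Pr="pres g eta lam qr"]
  show "cL g eta lam ql qr > 0" "cR g eta lam ql qr > 0"
    "cL g eta lam ql qr \<ge> hh ql * sound g eta lam ql"
    "cR g eta lam ql qr \<ge> hh qr * sound g eta lam qr"
    using sc unfolding cL_def cR_def by blast+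
  show "\<exists>Z. Z \<ge> 0 \<and> cL g eta lam ql qr = hh ql*(sound g eta lam ql + 2*Z) \<and> vel ql - ustar g eta lam ql qr \<le> Z"
    apply (rule exI[of _ "max 0 (vel ql - vel qr) + max 0 (pres g eta lam qr - pres g eta lam ql)/(hh ql * sound g eta lam ql + hh qr * sound g eta lam qr)"])
    using sc unfolding cL_def cR_def ustar_def Let_def by blast
  show "\<exists>Z. Z \<ge> 0 \<and> cR g eta lam ql qr = hh qr*(sound g eta lam qr + 2*Z) \<and> ustar g eta lam ql qr - vel qr \<le> Z"
    apply (rule exI[of _ "max 0 (vel ql - vel qr) + max 0 (pres g eta lam ql - pres g eta lam qr)/(hh ql * sound g eta lam ql + hh qr * sound g eta lam qr)"])
    using sc unfolding cL_def cR_def ustar_def Let_def by blast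
qed

abbreviation "cl \<equiv> cL g eta lam"
abbreviation "cr \<equiv> cR g eta lam"
abbreviation "us \<equiv> ustar g eta lam"
abbreviation "pis \<equiv> pistar g eta lam"
abbreviation "hls \<equiv> hLstar g eta lam"
abbreviation "hrs \<equiv> hRstar g eta lam"
abbreviation "S1 \<equiv> Sig1 g eta lam"
abbreviation "S2 \<equiv> Sig2 g eta lam"
abbreviation "S3 \<equiv> Sig3 g eta lam"
abbreviation "QL \<equiv> qLstar g eta lam"
abbreviation "QR \<equiv> qRstar g eta lam"
abbreviation "PP \<equiv> pres g eta lam"
abbreviation "aa \<equiv> sound g eta lam"

lemma rs_star:
  assumes A: "admissible ql" "admissible qr"
  shows "us ql qr - vel ql = (cr ql qr*(vel qr - vel ql) + PP ql - PP qr)/(cl ql qr + cr ql qr)"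
    "us ql qr - vel qr = (cl ql qr*(vel ql - vel qr) + PP ql - PP qr)/(cl ql qr + cr ql qr)"
    "pis ql qr = PP ql - cl ql qr * (us ql qr - vel ql)"
    "pis ql qr = PP qr + cr ql qr * (us ql qr - vel qr)"
    "1 / hls ql qr = 1 / hh ql + (us ql qr - vel ql) / cl ql qr"
    "1 / hrs ql qr = 1 / hh qr - (us ql qr - vel qr) / cr ql qr"
    "hls ql qr > 0" "hrs ql qr > 0"
    "hls ql qr * (us ql qr - S1 ql qr) = cl ql qr"
    "hrs ql qr * (S3 ql qr - us ql qr) = cr ql qr"
    "S1 ql qr < S2 ql qr" "S2 ql qr < S3 ql qr"
proof -
  note sp = rs_speed[OF A]
  define c1 where "c1 = cl ql qr"
  define c2 where "c2 = cr ql qr"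
  have c1: "c1 > 0" and c2: "c2 > 0" using sp unfolding c1_def c2_def by auto
  have hl: "hh ql > 0" and hr: "hh qr > 0" using A adm_h by auto
  have al: "aa ql > 0" and ar: "aa qr > 0" using A sound_pos by auto
  have usd: "us ql qr = (c1 * vel ql + c2 * vel qr + PP ql - PP qr)/(c1+c2)"
    unfolding ustar_def c1_def c2_def Let_def by simp
  show e1: "us ql qr - vel ql = (cr ql qr*(vel qr - vel ql) + PP ql - PP qr)/(cl ql qr + cr ql qr)"
    using c1 c2 unfolding usd c1_def[symmetric] c2_def[symmetric] by (simp add: field_simps)
  show e2: "us ql qr - vel qr = (cl ql qr*(vel ql - vel qr) + PP ql - PP qr)/(cl ql qr + cr ql qr)"
    using c1 c2 unfolding usd c1_def[symmetric] c2_def[symmetric] by (simp add: field_simps)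
  show "pis ql qr = PP ql - cl ql qr * (us ql qr - vel ql)"
    using c1 c2 unfolding pistar_def Let_def e1 c1_def[symmetric] c2_def[symmetric] by (simp add: field_simps)
  show "pis ql qr = PP qr + cr ql qr * (us ql qr - vel qr)"
    using c1 c2 unfolding pistar_def Let_def e2 c1_def[symmetric] c2_def[symmetric] by (simp add: field_simps)
  have i1: "1 / hls ql qr = 1 / hh ql + (us ql qr - vel ql) / cl ql qr"
    using c1 c2 unfolding hLstar_def Let_def e1 c1_def[symmetric] c2_def[symmetric] by (simp add: field_simps)
  have i2: "1 / hrs ql qr = 1 / hh qr - (us ql qr - vel qr) / cr ql qr"
    using c1 c2 unfolding hRstar_def Let_def e2 c1_def[symmetric] c2_def[symmetric]
    apply (simp add: field_simps) by (simp add: add_divide_distrib[symmetric])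
  show "1 / hls ql qr = 1 / hh ql + (us ql qr - vel ql) / cl ql qr" by (fact i1)
  show "1 / hrs ql qr = 1 / hh qr - (us ql qr - vel qr) / cr ql qr" by (fact i2)
  obtain Z1 where Z1: "Z1 \<ge> 0" "c1 = hh ql * (aa ql + 2*Z1)" "vel ql - us ql qr \<le> Z1"
    using sp(5) unfolding c1_def by blast
  obtain Z2 where Z2: "Z2 \<ge> 0" "c2 = hh qr * (aa qr + 2*Z2)" "us ql qr - vel qr \<le> Z2"
    using sp(6) unfolding c2_def by blast
  have p1: "c1 + hh ql * (us ql qr - vel ql) > 0"
  proof -
    have "c1 + hh ql * (us ql qr - vel ql) \<ge> hh ql * (aa ql + 2*Z1) - hh ql * Z1"
      using Z1 hl mult_left_mono[of "-Z1" "us ql qr - vel ql" "hh ql"] by simp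
    moreover have "hh ql * (aa ql + 2*Z1) - hh ql * Z1 = hh ql * (aa ql + Z1)" by algebra
    moreover have "hh ql * (aa ql + Z1) > 0" using hl al Z1 by simp
    ultimately show ?thesis by linarith
  qed
  have p2: "c2 - hh qr * (us ql qr - vel qr) > 0"
  proof -
    have "c2 - hh qr * (us ql qr - vel qr) \<ge> hh qr * (aa qr + 2*Z2) - hh qr * Z2"
      using Z2 hr mult_left_mono[of "us ql qr - vel qr" "Z2" "hh qr"] by simp
    moreover have "hh qr * (aa qr + 2*Z2) - hh qr * Z2 = hh qr * (aa qr + Z2)" by algebra
    moreover have "hh qr * (aa qr + Z2) > 0" using hr ar Z2 by simp
    ultimately show ?thesis by linarith
  qed
  have j1: "1 / hh ql + (us ql qr - vel ql) / c1 = (c1 + hh ql * (us ql qr - vel ql)) / (hh ql * c1)"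
    using hl c1 by (simp add: field_simps)
  have j2: "1 / hh qr - (us ql qr - vel qr) / c2 = (c2 - hh qr * (us ql qr - vel qr)) / (hh qr * c2)"
    using hr c2 by (simp add: field_simps)
  have "1 / hls ql qr > 0" using i1 j1 p1 hl c1 unfolding c1_def by simp
  then show hlp: "hls ql qr > 0" by simp
  have "1 / hrs ql qr > 0" using i2 j2 p2 hr c2 unfolding c2_def by simp
  then show hrp: "hrs ql qr > 0" by simp
  have "us ql qr - S1 ql qr = c1 * (1 / hls ql qr)"
    unfolding i1 Sig1_def c1_def[symmetric] using c1 hl by (simp add: field_simps)
  then show k1: "hls ql qr * (us ql qr - S1 ql qr) = cl ql qr" using hlp unfolding c1_def by simp
  have "S3 ql qr - us ql qr = c2 * (1 / hrs ql qr)"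
    unfolding i2 Sig3_def c2_def[symmetric] using c2 hr by (simp add: field_simps)
  then show k2: "hrs ql qr * (S3 ql qr - us ql qr) = cr ql qr" using hrp unfolding c2_def by simp
  show "S1 ql qr < S2 ql qr" using k1 hlp c1 unfolding Sig2_def c1_def
    by (metis diff_gt_0_iff_gt zero_less_mult_pos)
  show "S2 ql qr < S3 ql qr" using k2 hrp c2 unfolding Sig2_def c2_def
    by (metis diff_gt_0_iff_gt zero_less_mult_pos)
qed

lemma star_comp:
  assumes A: "admissible ql" "admissible qr"
  shows "hh (QL ql qr) = hls ql qr" "hu (QL ql qr) = hls ql qr * us ql qr"
    "hsxx (QL ql qr) = hls ql qr * (sigxx ql * (hh ql / hls ql qr)^2)"
    "hszz (QL ql qr) = hls ql qr * (sigzz ql * (hls ql qr / hh ql)^2)"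
    "vel (QL ql qr) = us ql qr"
    "sigxx (QL ql qr) = sigxx ql * (hh ql / hls ql qr)^2"
    "sigzz (QL ql qr) = sigzz ql * (hls ql qr / hh ql)^2"
    "admissible (QL ql qr)"
    "hh (QR ql qr) = hrs ql qr" "hu (QR ql qr) = hrs ql qr * us ql qr"
    "hsxx (QR ql qr) = hrs ql qr * (sigxx qr * (hh qr / hrs ql qr)^2)"
    "hszz (QR ql qr) = hrs ql qr * (sigzz qr * (hrs ql qr / hh qr)^2)"
    "vel (QR ql qr) = us ql qr"
    "sigxx (QR ql qr) = sigxx qr * (hh qr / hrs ql qr)^2"
    "sigzz (QR ql qr) = sigzz qr * (hrs ql qr / hh qr)^2"
    "admissible (QR ql qr)"
proof -
  have p: "hls ql qr > 0" "hrs ql qr > 0" using rs_star[OF A] by auto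
  have h: "hh ql > 0" "hh qr > 0" using A adm_h by auto
  have s: "sigxx ql > 0" "sigzz ql > 0" "sigxx qr > 0" "sigzz qr > 0" using A adm_sx adm_sz by auto
  show "hh (QL ql qr) = hls ql qr" "hu (QL ql qr) = hls ql qr * us ql qr"
    "hsxx (QL ql qr) = hls ql qr * (sigxx ql * (hh ql / hls ql qr)^2)"
    "hszz (QL ql qr) = hls ql qr * (sigzz ql * (hls ql qr / hh ql)^2)"
    "hh (QR ql qr) = hrs ql qr" "hu (QR ql qr) = hrs ql qr * us ql qr"
    "hsxx (QR ql qr) = hrs ql qr * (sigxx qr * (hh qr / hrs ql qr)^2)"
    "hszz (QR ql qr) = hrs ql qr * (sigzz qr * (hrs ql qr / hh qr)^2)"
    by (simp_all add: qLstar_def qRstar_def Let_def hh_def hu_def hsxx_def hszz_def)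
  then show "vel (QL ql qr) = us ql qr"
    "sigxx (QL ql qr) = sigxx ql * (hh ql / hls ql qr)^2"
    "sigzz (QL ql qr) = sigzz ql * (hls ql qr / hh ql)^2"
    "vel (QR ql qr) = us ql qr"
    "sigxx (QR ql qr) = sigxx qr * (hh qr / hrs ql qr)^2"
    "sigzz (QR ql qr) = sigzz qr * (hrs ql qr / hh qr)^2"
    using p by (simp_all add: vel_def sigxx_def sigzz_def)
  then show "admissible (QL ql qr)" "admissible (QR ql qr)"
    using p h s \<open>hh (QL ql qr) = hls ql qr\<close> \<open>hh (QR ql qr) = hrs ql qr\<close>
    by (simp_all add: admissible_def)
qed

lemma sel_lemma:
  fixes S1 S2 S3 p0 p1 p2 p3 f0 f1 f2 f3 :: real
  assumes "S1 < S2" "S2 < S3" "S1*(p1-p0) = f1-f0" "S2*(p2-p1) = f2-f1" "S3*(p3-p2) = f3-f2"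
  shows "(if 0<S1 then f0 else if 0<S2 then f1 else if 0<S3 then f2 else f3)
         = f0 + min 0 S1*(p1-p0) + min 0 S2*(p2-p1) + min 0 S3*(p3-p2)"
    "(if 0<S1 then f0 else if 0<S2 then f1 else if 0<S3 then f2 else f3)
         = f3 - max 0 S1*(p1-p0) - max 0 S2*(p2-p1) - max 0 S3*(p3-p2)"
  using assms by (auto simp: min_def max_def)

definition Amin :: "(state \<Rightarrow> real) \<Rightarrow> state \<Rightarrow> state \<Rightarrow> real" where
  "Amin f ql qr = min 0 (S1 ql qr)*(f (QL ql qr) - f ql) + min 0 (S2 ql qr)*(f (QR ql qr) - f (QL ql qr))
     + min 0 (S3 ql qr)*(f qr - f (QR ql qr))"
definition Apl :: "(state \<Rightarrow> real) \<Rightarrow> state \<Rightarrow> state \<Rightarrow> real" where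
  "Apl f ql qr = max 0 (S1 ql qr)*(f (QL ql qr) - f ql) + max 0 (S2 ql qr)*(f (QR ql qr) - f (QL ql qr))
     + max 0 (S3 ql qr)*(f qr - f (QR ql qr))"

lemma flux_rep:
  assumes A: "admissible ql" "admissible qr"
  shows "fluxH g eta lam ql qr = hu ql + Amin hh ql qr"
    "fluxH g eta lam ql qr = hu qr - Apl hh ql qr"
    "fluxHU g eta lam ql qr = hu ql * vel ql + PP ql + Amin hu ql qr"
    "fluxHU g eta lam ql qr = hu qr * vel qr + PP qr - Apl hu ql qr"
    "fluxLw w g eta lam ql qr = w ql * vel ql + Amin w ql qr"
    "fluxRw w g eta lam ql qr = w qr * vel qr - Apl w ql qr"
proof -
  note st = rs_star[OF A] and sc = star_comp[OF A]
  have h: "hh ql > 0" "hh qr > 0" using A adm_h by auto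
  have u: "hu ql = hh ql * vel ql" "hu qr = hh qr * vel qr" using A adm_comp by auto
  have r1: "S1 ql qr * (hls ql qr - hh ql) = hls ql qr * us ql qr - hh ql * vel ql"
  proof -
    have "S1 ql qr = vel ql - cl ql qr / hh ql" by (simp add: Sig1_def)
    then have "hh ql * (vel ql - S1 ql qr) = cl ql qr" using h by simp
    then show ?thesis using st(9) by (simp add: algebra_simps)
  qed
  have r3: "S3 ql qr * (hh qr - hrs ql qr) = hh qr * vel qr - hrs ql qr * us ql qr"
  proof -
    have "S3 ql qr = vel qr + cr ql qr / hh qr" by (simp add: Sig3_def)
    then have "hh qr * (S3 ql qr - vel qr) = cr ql qr" using h by simp
    then show ?thesis using st(10) by (simp add: algebra_simps)
  qed
  have m1: "S1 ql qr * (hls ql qr * us ql qr - hh ql * vel ql) =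
      (hls ql qr * us ql qr * us ql qr + pis ql qr) - (hh ql * vel ql * vel ql + PP ql)"
  proof -
    have "S1 ql qr = vel ql - cl ql qr / hh ql" by (simp add: Sig1_def)
    then have "hh ql * (vel ql - S1 ql qr) = cl ql qr" using h by simp
    then have e: "hh ql * (vel ql - S1 ql qr) = cl ql qr" .
    have "hh ql * vel ql * vel ql - S1 ql qr * (hh ql * vel ql) = vel ql * (hh ql * (vel ql - S1 ql qr))"
      by (simp add: algebra_simps)
    then have a: "hh ql * vel ql * vel ql - S1 ql qr * (hh ql * vel ql) = vel ql * cl ql qr"
      using e by simp
    have b: "hls ql qr * us ql qr * us ql qr - S1 ql qr * (hls ql qr * us ql qr) = us ql qr * cl ql qr"
      using st(9) by (metis mult.commute mult.left_commute right_diff_distrib)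
    have c: "pis ql qr - PP ql = - cl ql qr * (us ql qr - vel ql)" using st(3) by simp
    show ?thesis using a b c by (simp add: algebra_simps)
  qed
  have m3: "S3 ql qr * (hh qr * vel qr - hrs ql qr * us ql qr) =
      (hh qr * vel qr * vel qr + PP qr) - (hrs ql qr * us ql qr * us ql qr + pis ql qr)"
  proof -
    have "S3 ql qr = vel qr + cr ql qr / hh qr" by (simp add: Sig3_def)
    then have "hh qr * (S3 ql qr - vel qr) = cr ql qr" using h by simp
    then have e: "hh qr * (S3 ql qr - vel qr) = cr ql qr" .
    have "S3 ql qr * (hh qr * vel qr) - hh qr * vel qr * vel qr = vel qr * (hh qr * (S3 ql qr - vel qr))"
      by (simp add: algebra_simps)
    then have a: "S3 ql qr * (hh qr * vel qr) - hh qr * vel qr * vel qr = vel qr * cr ql qr"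
      using e by simp
    have b: "S3 ql qr * (hrs ql qr * us ql qr) - hrs ql qr * us ql qr * us ql qr = us ql qr * cr ql qr"
      using st(10) by (metis mult.commute mult.left_commute right_diff_distrib)
    have c: "pis ql qr - PP qr = cr ql qr * (us ql qr - vel qr)" using st(4) by simp
    show ?thesis using a b c by (simp add: algebra_simps)
  qed
  have r2: "S2 ql qr * (hrs ql qr - hls ql qr) = hrs ql qr * us ql qr - hls ql qr * us ql qr"
    by (simp add: Sig2_def algebra_simps)
  have m2: "S2 ql qr * (hrs ql qr * us ql qr - hls ql qr * us ql qr) =
      (hrs ql qr * us ql qr * us ql qr + pis ql qr) - (hls ql qr * us ql qr * us ql qr + pis ql qr)"
    by (simp add: Sig2_def algebra_simps)
  have fH: "fluxH g eta lam ql qr = (if 0 < S1 ql qr then hh ql * vel ql else if 0 < S2 ql qr then hls ql qr * us ql qr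
     else if 0 < S3 ql qr then hrs ql qr * us ql qr else hh qr * vel qr)"
    unfolding fluxH_def riem0_def using sc u by simp
  have fHU: "fluxHU g eta lam ql qr = (if 0 < S1 ql qr then hh ql * vel ql * vel ql + PP ql
     else if 0 < S2 ql qr then hls ql qr * us ql qr * us ql qr + pis ql qr
     else if 0 < S3 ql qr then hrs ql qr * us ql qr * us ql qr + pis ql qr else hh qr * vel qr * vel qr + PP qr)"
    unfolding fluxHU_def riem0_def using sc u by simp
  note L1 = sel_lemma[OF st(11) st(12) r1 r2 r3]
  note L2 = sel_lemma[OF st(11) st(12) m1 m2 m3]
  show "fluxH g eta lam ql qr = hu ql + Amin hh ql qr"
    unfolding fH L1(1) Amin_def using sc u by simp
  show "fluxH g eta lam ql qr = hu qr - Apl hh ql qr"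
    unfolding fH L1(2) Apl_def using sc u by simp
  show "fluxHU g eta lam ql qr = hu ql * vel ql + PP ql + Amin hu ql qr"
    unfolding fHU L2(1) Amin_def using sc u by simp
  show "fluxHU g eta lam ql qr = hu qr * vel qr + PP qr - Apl hu ql qr"
    unfolding fHU L2(2) Apl_def using sc u by simp
  show "fluxLw w g eta lam ql qr = w ql * vel ql + Amin w ql qr"
    "fluxRw w g eta lam ql qr = w qr * vel qr - Apl w ql qr"
    unfolding fluxLw_def fluxRw_def Amin_def Apl_def Let_def by (simp_all add: algebra_simps)
qed

definition wl :: "real \<Rightarrow> state \<Rightarrow> state \<Rightarrow> state \<Rightarrow> (real \<times> state) list" where
  "wl t qa q0 qb =
    [(1 - t * (- min 0 (S1 q0 qb)) - t * max 0 (S3 qa q0), q0),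
     (t * (min 0 (S2 q0 qb) - min 0 (S1 q0 qb)), QL q0 qb),
     (t * (min 0 (S3 q0 qb) - min 0 (S2 q0 qb)), QR q0 qb),
     (t * (- min 0 (S3 q0 qb)), qb),
     (t * max 0 (S1 qa q0), qa),
     (t * (max 0 (S2 qa q0) - max 0 (S1 qa q0)), QL qa q0),
     (t * (max 0 (S3 qa q0) - max 0 (S2 qa q0)), QR qa q0)]"

lemma wl_sum: "(\<Sum>(w,y)\<leftarrow>wl t qa q0 qb. w * f y) = f q0 - t * (Amin f q0 qb + Apl f qa q0)"
  unfolding wl_def Amin_def Apl_def by (simp add: algebra_simps)

lemma wl_w1: "(\<Sum>(w,y)\<leftarrow>wl t qa q0 qb. w) = 1"
  unfolding wl_def by (simp add: algebra_simps)

lemma wl_ok: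
  assumes A: "admissible qa" "admissible q0" "admissible qb"
    and t: "t \<ge> 0" "t * \<bar>S1 q0 qb\<bar> \<le> 1/2" "t * \<bar>S3 qa q0\<bar> \<le> 1/2"
  shows "\<forall>(w,y)\<in>set (wl t qa q0 qb). 0 \<le> w \<and> admissible y"
proof -
  have o1: "S1 q0 qb \<le> S2 q0 qb" "S2 q0 qb \<le> S3 q0 qb" using rs_star[OF A(2,3)] by auto
  have o2: "S1 qa q0 \<le> S2 qa q0" "S2 qa q0 \<le> S3 qa q0" using rs_star[OF A(1,2)] by auto
  have "t * (- min 0 (S1 q0 qb)) \<le> t * \<bar>S1 q0 qb\<bar>" using t by (intro mult_left_mono) auto
  moreover have "t * max 0 (S3 qa q0) \<le> t * \<bar>S3 qa q0\<bar>" using t by (intro mult_left_mono) auto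
  ultimately have w0: "0 \<le> 1 - t * (- min 0 (S1 q0 qb)) - t * max 0 (S3 qa q0)" using t by linarith
  have mn: "\<And>x::real. 0 \<le> - min 0 x" "\<And>x::real. 0 \<le> max 0 x" by auto
  have ws: "0 \<le> t * (min 0 (S2 q0 qb) - min 0 (S1 q0 qb))" "0 \<le> t * (min 0 (S3 q0 qb) - min 0 (S2 q0 qb))"
     "0 \<le> t * (- min 0 (S3 q0 qb))" "0 \<le> t * max 0 (S1 qa q0)"
     "0 \<le> t * (max 0 (S2 qa q0) - max 0 (S1 qa q0))" "0 \<le> t * (max 0 (S3 qa q0) - max 0 (S2 qa q0))"
    using o1 o2 by (intro mult_nonneg_nonneg[OF t(1)]; simp add: min_def max_def)+
  have ad: "admissible (QL q0 qb)" "admissible (QR q0 qb)" "admissible (QL qa q0)" "admissible (QR qa q0)"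
    using star_comp(8,16)[OF A(2,3)] star_comp(8,16)[OF A(1,2)] by auto
  show ?thesis unfolding wl_def using w0 ws A ad by (simp only: list.set insert_iff empty_iff ball_simps prod.case)
qed

lemma L_mono: fixes xs :: "(real \<times> 'a) list" and F1 F2 :: "'a \<Rightarrow> real" shows "(\<forall>(w,y)\<in>set xs. 0 \<le> w \<and> F1 y \<le> F2 y) \<Longrightarrow> (\<Sum>(w,y)\<leftarrow>xs. w * F1 y) \<le> (\<Sum>(w,y)\<leftarrow>xs. w * F2 y)"
proof (induction xs)
  case Nil then show ?case by simp
next
  case (Cons p xs)
  obtain w y where p: "p = (w,y)" by fastforce
  have "w * F1 y \<le> w * F2 y" using Cons.prems p by (auto intro: mult_left_mono)
  then show ?case using Cons p by (auto intro: add_mono)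
qed

lemma L_pos: fixes xs :: "(real \<times> 'a) list" and F :: "'a \<Rightarrow> real" shows "(\<forall>(w,y)\<in>set xs. 0 \<le> w \<and> 0 < F y) \<Longrightarrow> 0 < (\<Sum>(w,y)\<leftarrow>xs. w) \<Longrightarrow> 0 < (\<Sum>(w,y)\<leftarrow>xs. w * F y)"
proof (induction xs)
  case Nil then show ?case by simp
next
  case (Cons p xs)
  obtain w y where p: "p = (w,y)" by fastforce
  have wy: "0 \<le> w" "0 < F y" using Cons.prems(1) p by auto
  have "(\<Sum>(w,y)\<leftarrow>xs. w * (\<lambda>_. 0) y) \<le> (\<Sum>(w,y)\<leftarrow>xs. w * F y)"
    using Cons.prems(1) by (intro L_mono) auto
  moreover have "(\<Sum>(w,y)\<leftarrow>xs. w * (\<lambda>_. 0::real) y) = 0" by (induction xs) auto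
  ultimately have nn: "0 \<le> (\<Sum>(w,y)\<leftarrow>xs. w * F y)" by simp
  show ?case
  proof (cases "w = 0")
    case True
    then have "0 < (\<Sum>(w,y)\<leftarrow>xs. w)" using Cons.prems(2) p by simp
    then have "0 < (\<Sum>(w,y)\<leftarrow>xs. w * F y)" using Cons.IH Cons.prems(1) by auto
    then show ?thesis using p True by simp
  next
    case False
    then have "0 < w * F y" using wy by simp
    then show ?thesis using p nn by simp
  qed
qed

lemma L_lin: fixes xs :: "(real \<times> 'a) list" shows "(\<Sum>(w,y)\<leftarrow>xs. w * (a + b1 * f1 y + b2 * f2 y + b3 * f3 y + b4 * f4 y))
   = a * (\<Sum>(w,y)\<leftarrow>xs. w) + b1 * (\<Sum>(w,y)\<leftarrow>xs. w * f1 y) + b2 * (\<Sum>(w,y)\<leftarrow>xs. w * f2 y)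
     + b3 * (\<Sum>(w,y)\<leftarrow>xs. w * f3 y) + b4 * (\<Sum>(w,y)\<leftarrow>xs. w * f4 y)"
  by (induction xs) (auto simp: algebra_simps split: prod.splits)

lemma step_comp0:
  fixes t :: real
  assumes A: "admissible qa" "admissible q0" "admissible qb"
  defines "N \<equiv> q0 - t *\<^sub>R (fluxL g eta lam q0 qb - fluxR g eta lam qa q0)"
  shows "hh N = hh q0 - t * (Amin hh q0 qb + Apl hh qa q0)"
    "hu N = hu q0 - t * (Amin hu q0 qb + Apl hu qa q0)"
    "hsxx N = hsxx q0 - t * (Amin hsxx q0 qb + Apl hsxx qa q0)"
    "hszz N = hszz q0 - t * (Amin hszz q0 qb + Apl hszz qa q0)"
proof -
  note f1 = flux_rep[OF A(2,3)] and f2 = flux_rep[OF A(1,2)]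
  show "hh N = hh q0 - t * (Amin hh q0 qb + Apl hh qa q0)"
    unfolding N_def by (simp add: hh_def fluxL_def fluxR_def f1(1) f2(2) algebra_simps)
  show "hu N = hu q0 - t * (Amin hu q0 qb + Apl hu qa q0)"
    unfolding N_def by (simp add: hu_def fluxL_def fluxR_def f1(3) f2(4) algebra_simps)
  show "hsxx N = hsxx q0 - t * (Amin hsxx q0 qb + Apl hsxx qa q0)"
    unfolding N_def by (simp add: hsxx_def fluxL_def fluxR_def f1(5)[of hsxx] f2(6)[of hsxx] algebra_simps)
  show "hszz N = hszz q0 - t * (Amin hszz q0 qb + Apl hszz qa q0)"
    unfolding N_def by (simp add: hszz_def fluxL_def fluxR_def f1(5)[of hszz] f2(6)[of hszz] algebra_simps)
qed

lemma step_eq: "scheme_step g eta lam dx dt q i = q i - (dt / dx i) *\<^sub>R (fluxL g eta lam (q i) (q (i+1)) - fluxR g eta lam (q (i-1)) (q i))"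
  unfolding scheme_step_def by simp


lemma cfl_t:
  assumes S: "step_setting g eta lam dx dt q"
  shows "dt / dx i \<ge> 0" "dt / dx i * \<bar>S1 (q i) (q (i+1))\<bar> \<le> 1/2"
    "dt / dx i * \<bar>S3 (q (i-1)) (q i)\<bar> \<le> 1/2"
proof -
  have dx: "dx i > 0" and dt: "dt > 0" using S unfolding step_setting_def by auto
  show "dt / dx i \<ge> 0" using dx dt by simp
  have c1: "dt * Amax g eta lam (q i) (q (i+1)) \<le> dx i / 2"
    using S unfolding step_setting_def CFL_def by (meson min.cobounded1 order_trans divide_right_mono zero_le_numeral)
  have "dt * \<bar>S1 (q i) (q (i+1))\<bar> \<le> dt * Amax g eta lam (q i) (q (i+1))"
    using dt unfolding Amax_def by (intro mult_left_mono) auto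
  then have "dt * \<bar>S1 (q i) (q (i+1))\<bar> \<le> dx i / 2" using c1 by linarith
  then show "dt / dx i * \<bar>S1 (q i) (q (i+1))\<bar> \<le> 1/2" using dx by (simp add: field_simps)
  have c2: "dt * Amax g eta lam (q (i-1)) (q (i-1+1)) \<le> min (dx (i-1)) (dx (i-1+1)) / 2"
    using S unfolding step_setting_def CFL_def by blast
  then have c2: "dt * Amax g eta lam (q (i-1)) (q i) \<le> dx i / 2"
    by (simp add: min_def split: if_splits)
  have "dt * \<bar>S3 (q (i-1)) (q i)\<bar> \<le> dt * Amax g eta lam (q (i-1)) (q i)"
    using dt unfolding Amax_def by (intro mult_left_mono) auto
  then have "dt * \<bar>S3 (q (i-1)) (q i)\<bar> \<le> dx i / 2" using c2 by linarith
  then show "dt / dx i * \<bar>S3 (q (i-1)) (q i)\<bar> \<le> 1/2" using dx by (simp add: field_simps)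
qed

lemma step_rep:
  fixes i :: int
  assumes S: "step_setting g eta lam dx dt q"
  defines "xs \<equiv> wl (dt / dx i) (q (i-1)) (q i) (q (i+1))"
  defines "N \<equiv> scheme_step g eta lam dx dt q i"
  shows "\<forall>(w,y)\<in>set xs. 0 \<le> w \<and> admissible y" "(\<Sum>(w,y)\<leftarrow>xs. w) = 1"
    "hh N = (\<Sum>(w,y)\<leftarrow>xs. w * hh y)" "hu N = (\<Sum>(w,y)\<leftarrow>xs. w * hu y)"
    "hsxx N = (\<Sum>(w,y)\<leftarrow>xs. w * hsxx y)" "hszz N = (\<Sum>(w,y)\<leftarrow>xs. w * hszz y)"
proof -
  have A: "admissible (q (i-1))" "admissible (q i)" "admissible (q (i+1))"
    using S unfolding step_setting_def by auto
  note ct = cfl_t[OF S, of i]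
  show "\<forall>(w,y)\<in>set xs. 0 \<le> w \<and> admissible y" unfolding xs_def by (rule wl_ok[OF A ct])
  show "(\<Sum>(w,y)\<leftarrow>xs. w) = 1" unfolding xs_def by (rule wl_w1)
  note sc = step_comp0[OF A, of "dt / dx i"]
  show "hh N = (\<Sum>(w,y)\<leftarrow>xs. w * hh y)" "hu N = (\<Sum>(w,y)\<leftarrow>xs. w * hu y)"
    "hsxx N = (\<Sum>(w,y)\<leftarrow>xs. w * hsxx y)" "hszz N = (\<Sum>(w,y)\<leftarrow>xs. w * hszz y)"
    unfolding xs_def N_def step_eq wl_sum using sc by simp_all
qed

lemma positivity:
  assumes S: "step_setting g eta lam dx dt q"
  shows "admissible (scheme_step g eta lam dx dt q i)"
proof -
  note r = step_rep[OF S, of i]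
  have "0 < hh (scheme_step g eta lam dx dt q i)" unfolding r(3)
    using r(1,2) adm_h by (intro L_pos) auto
  moreover have "0 < hsxx (scheme_step g eta lam dx dt q i)" unfolding r(5)
    using r(1,2) adm_pos by (intro L_pos) auto
  moreover have "0 < hszz (scheme_step g eta lam dx dt q i)" unfolding r(6)
    using r(1,2) adm_pos by (intro L_pos) auto
  ultimately show ?thesis unfolding admissible_def sigxx_def sigzz_def by simp
qed

lemma sxx_eq: assumes "admissible y" shows "s_xx y = 1 / sqrt (hsxx y * hh y)"
proof -
  have h: "hh y > 0" using assms adm_h by auto
  have "sqrt (sigxx y) * hh y = sqrt (sigxx y) * sqrt (hh y ^ 2)" using h by simp
  also have "\<dots> = sqrt (sigxx y * hh y ^ 2)" by (simp add: real_sqrt_mult)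
  also have "sigxx y * hh y ^ 2 = hsxx y * hh y" using h by (simp add: sigxx_def power2_eq_square)
  finally show ?thesis unfolding s_xx_def by simp
qed

lemma szz_eq: assumes "admissible y" shows "s_zz y = sqrt (hszz y / hh y ^ 3)"
proof -
  have h: "hh y > 0" using assms adm_h by auto
  have "sqrt (sigzz y) / hh y = sqrt (sigzz y) / sqrt (hh y ^ 2)" using h by simp
  also have "\<dots> = sqrt (sigzz y / hh y ^ 2)" by (simp add: real_sqrt_divide)
  also have "sigzz y / hh y ^ 2 = hszz y / hh y ^ 3" using h by (simp add: sigzz_def power2_eq_square power3_eq_cube)
  finally show ?thesis unfolding s_zz_def by simp
qed

lemma sxx_le: assumes "admissible y" "k > 0" shows "s_xx y \<le> k \<longleftrightarrow> 1 / k^2 \<le> hsxx y * hh y"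
proof -
  have p: "hsxx y * hh y > 0" using assms(1) adm_pos adm_h by simp
  have "s_xx y \<le> k \<longleftrightarrow> 1 / k \<le> sqrt (hsxx y * hh y)"
    unfolding sxx_eq[OF assms(1)] using p assms(2) by (simp add: field_simps)
  also have "\<dots> \<longleftrightarrow> sqrt ((1/k)^2) \<le> sqrt (hsxx y * hh y)"
    using assms(2) by simp
  also have "\<dots> \<longleftrightarrow> (1/k)^2 \<le> hsxx y * hh y" by (rule real_sqrt_le_iff)
  finally show ?thesis by (simp add: power_divide)
qed

lemma szz_ge: assumes "admissible y" "k > 0" shows "k \<le> s_zz y \<longleftrightarrow> k^2 * hh y ^ 3 \<le> hszz y"
proof -
  have h: "hh y > 0" using assms(1) adm_h by simp
  have "k \<le> s_zz y \<longleftrightarrow> k^2 \<le> hszz y / hh y ^ 3"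
  proof -
    have "k = sqrt (k^2)" using assms(2) by simp
    then show ?thesis unfolding szz_eq[OF assms(1)] by (metis real_sqrt_le_iff)
  qed
  also have "\<dots> \<longleftrightarrow> k^2 * hh y ^ 3 \<le> hszz y" using h by (simp add: field_simps)
  finally show ?thesis .
qed

lemma star_inv:
  assumes A: "admissible ql" "admissible qr"
  shows "hsxx (QL ql qr) * hh (QL ql qr) = hsxx ql * hh ql"
    "hsxx (QR ql qr) * hh (QR ql qr) = hsxx qr * hh qr"
    "hszz (QL ql qr) / hh (QL ql qr) ^ 3 = hszz ql / hh ql ^ 3"
    "hszz (QR ql qr) / hh (QR ql qr) ^ 3 = hszz qr / hh qr ^ 3"
proof -
  note sc = star_comp[OF A]
  have p: "hls ql qr > 0" "hrs ql qr > 0" using rs_star[OF A] by auto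
  have h: "hh ql > 0" "hh qr > 0" using A adm_h by auto
  show "hsxx (QL ql qr) * hh (QL ql qr) = hsxx ql * hh ql"
    using p h unfolding sc(1,3) by (simp add: sigxx_def field_simps power2_eq_square)
  show "hsxx (QR ql qr) * hh (QR ql qr) = hsxx qr * hh qr"
    using p h unfolding sc(9,11) by (simp add: sigxx_def field_simps power2_eq_square)
  show "hszz (QL ql qr) / hh (QL ql qr) ^ 3 = hszz ql / hh ql ^ 3"
    using p h unfolding sc(1,4) by (simp add: sigzz_def field_simps power2_eq_square power3_eq_cube)
  show "hszz (QR ql qr) / hh (QR ql qr) ^ 3 = hszz qr / hh qr ^ 3"
    using p h unfolding sc(9,12) by (simp add: sigzz_def field_simps power2_eq_square power3_eq_cube)
qed

lemma wl_set: "(w,y) \<in> set (wl t qa q0 qb) \<Longrightarrow> y \<in> {q0, QL q0 qb, QR q0 qb, qb, qa, QL qa q0, QR qa q0}"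
  unfolding wl_def by auto

lemma L_lin1: fixes xs :: "(real \<times> 'a) list" shows
  "(\<Sum>(w,y)\<leftarrow>xs. w * (a + b * f y)) = a * (\<Sum>(w,y)\<leftarrow>xs. w) + b * (\<Sum>(w,y)\<leftarrow>xs. w * f y)"
  by (induction xs) (auto simp: algebra_simps split: prod.splits)

lemma max_principle:
  assumes S: "step_setting g eta lam dx dt q" and k: "k > 0" and B: "\<forall>i. s_xx (q i) \<le> k"
  shows "s_xx (scheme_step g eta lam dx dt q i) \<le> k"
proof -
  note r = step_rep[OF S, of i]
  define N where "N = scheme_step g eta lam dx dt q i"
  define xs where "xs = wl (dt / dx i) (q (i-1)) (q i) (q (i+1))"
  have adN: "admissible N" unfolding N_def by (rule positivity[OF S])
  define H where "H = hh N"
  have H: "H > 0" unfolding H_def using adN adm_h by simp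
  have A: "admissible (q (i-1))" "admissible (q i)" "admissible (q (i+1))"
    using S unfolding step_setting_def by auto
  have each: "1 / k^2 \<le> hsxx y * hh y" if "(w,y) \<in> set xs" for w y
  proof -
    have ady: "admissible y" using r(1) that unfolding xs_def by auto
    have "y \<in> {q i, QL (q i) (q (i+1)), QR (q i) (q (i+1)), q (i+1), q (i-1), QL (q (i-1)) (q i), QR (q (i-1)) (q i)}"
      using wl_set that unfolding xs_def by blast
    moreover have "\<And>j. 1 / k^2 \<le> hsxx (q j) * hh (q j)"
      using B S sxx_le k unfolding step_setting_def by blast
    ultimately show ?thesis using star_inv[OF A(2,3)] star_inv[OF A(1,2)] by auto
  qed
  have tan: "2 / (k^2 * H) + (- 1 / (k^2 * H^2)) * hh y \<le> hsxx y" if "(w,y) \<in> set xs" for w y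
  proof -
    have ady: "admissible y" using r(1) that unfolding xs_def by auto
    have hy: "hh y > 0" using ady adm_h by auto
    have "1 / k^2 / hh y \<le> hsxx y" using each[OF that] hy by (subst pos_divide_le_eq) auto
    moreover have "2 / (k^2 * H) + (- 1 / (k^2 * H^2)) * hh y \<le> 1 / k^2 / hh y"
    proof -
      have "(hh y - H)^2 \<ge> 0" by simp
      then have "2 * hh y * H - hh y^2 \<le> H^2" by (simp add: power2_eq_square algebra_simps)
      moreover have "2 / (k^2 * H) + (- 1 / (k^2 * H^2)) * hh y = (2 * hh y * H - hh y^2) / (k^2 * H^2 * hh y)"
        using hy H k by (simp add: field_simps power2_eq_square)
      moreover have "1 / k^2 / hh y = H^2 / (k^2 * H^2 * hh y)" using hy H k by (simp add: field_simps)
      moreover have "k^2 * H^2 * hh y > 0" using hy H k by simp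
      ultimately show ?thesis by (metis divide_right_mono less_imp_le)
    qed
    ultimately show ?thesis by linarith
  qed
  have "(\<Sum>(w,y)\<leftarrow>xs. w * (2 / (k^2 * H) + (- 1 / (k^2 * H^2)) * hh y)) \<le> (\<Sum>(w,y)\<leftarrow>xs. w * hsxx y)"
    using r(1) tan unfolding xs_def by (intro L_mono) auto
  then have "2 / (k^2 * H) + (- 1 / (k^2 * H^2)) * H \<le> hsxx N"
    unfolding L_lin1 using r(2,3,5) unfolding xs_def[symmetric] N_def[symmetric] H_def by simp
  moreover have "2 / (k^2 * H) + (- 1 / (k^2 * H^2)) * H = 1 / k^2 / H"
    using H k by (simp add: field_simps power2_eq_square)
  ultimately have "1 / k^2 / H \<le> hsxx N" by simp
  then have "1 / k^2 \<le> hsxx N * hh N" using H unfolding H_def[symmetric]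
    by (subst (asm) pos_divide_le_eq) auto
  then show ?thesis using sxx_le[OF adN k] unfolding N_def by simp
qed

lemma min_principle:
  assumes S: "step_setting g eta lam dx dt q" and k: "k > 0" and B: "\<forall>i. k \<le> s_zz (q i)"
  shows "k \<le> s_zz (scheme_step g eta lam dx dt q i)"
proof -
  note r = step_rep[OF S, of i]
  define N where "N = scheme_step g eta lam dx dt q i"
  define xs where "xs = wl (dt / dx i) (q (i-1)) (q i) (q (i+1))"
  have adN: "admissible N" unfolding N_def by (rule positivity[OF S])
  define H where "H = hh N"
  have H: "H > 0" unfolding H_def using adN adm_h by simp
  have A: "admissible (q (i-1))" "admissible (q i)" "admissible (q (i+1))"
    using S unfolding step_setting_def by auto
  have each: "k^2 \<le> hszz y / hh y ^ 3" if "(w,y) \<in> set xs" for w y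
  proof -
    have "y \<in> {q i, QL (q i) (q (i+1)), QR (q i) (q (i+1)), q (i+1), q (i-1), QL (q (i-1)) (q i), QR (q (i-1)) (q i)}"
      using wl_set that unfolding xs_def by blast
    moreover have "\<And>j. k^2 \<le> hszz (q j) / hh (q j) ^ 3"
    proof -
      fix j
      have "k^2 * hh (q j) ^ 3 \<le> hszz (q j)" using B S szz_ge k unfolding step_setting_def by blast
      moreover have "hh (q j) > 0" using S adm_h unfolding step_setting_def by blast
      ultimately show "k^2 \<le> hszz (q j) / hh (q j) ^ 3" by (simp add: field_simps)
    qed
    ultimately show ?thesis using star_inv[OF A(2,3)] star_inv[OF A(1,2)] by auto
  qed
  have tan: "k^2 * (-2 * H^3) + (k^2 * 3 * H^2) * hh y \<le> hszz y" if "(w,y) \<in> set xs" for w y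
  proof -
    have ady: "admissible y" using r(1) that unfolding xs_def by auto
    have hy: "hh y > 0" using ady adm_h by auto
    have "k^2 * hh y^3 \<le> hszz y" using each[OF that] hy by (simp add: field_simps)
    moreover have "k^2 * (-2 * H^3) + (k^2 * 3 * H^2) * hh y \<le> k^2 * hh y^3"
    proof -
      have "(hh y - H)^2 * (hh y + 2*H) \<ge> 0" using hy H by simp
      then have "3 * H^2 * hh y - 2 * H^3 \<le> hh y^3" by (simp add: power2_eq_square power3_eq_cube algebra_simps)
      then have "k^2 * (3 * H^2 * hh y - 2 * H^3) \<le> k^2 * hh y^3" by (intro mult_left_mono) auto
      then show ?thesis by (simp add: algebra_simps)
    qed
    ultimately show ?thesis by linarith
  qed
  have "(\<Sum>(w,y)\<leftarrow>xs. w * (k^2 * (-2 * H^3) + (k^2 * 3 * H^2) * hh y)) \<le> (\<Sum>(w,y)\<leftarrow>xs. w * hszz y)"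
    using r(1) tan unfolding xs_def by (intro L_mono) auto
  then have "k^2 * (-2 * H^3) + (k^2 * 3 * H^2) * H \<le> hszz N"
    unfolding L_lin1 using r(2,3,6) unfolding xs_def[symmetric] N_def[symmetric] H_def by simp
  then have "k^2 * hh N ^ 3 \<le> hszz N" unfolding H_def[symmetric]
    by (simp add: power2_eq_square power3_eq_cube algebra_simps)
  then show ?thesis using szz_ge[OF adN k] unfolding N_def by simp
qed

lemma state_eq: "hh x = hh y \<Longrightarrow> hu x = hu y \<Longrightarrow> hsxx x = hsxx y \<Longrightarrow> hszz x = hszz y \<Longrightarrow> x = y"
  unfolding hh_def hu_def hsxx_def hszz_def by (simp add: prod_eq_iff)

lemma steady_if:
  assumes A: "admissible ql" "admissible qr" and u: "vel ql = 0" "vel qr = 0" and P: "PP ql = PP qr"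
  shows "Amin f ql qr = 0" "Apl f ql qr = 0"
proof -
  note st = rs_star[OF A] and sc = star_comp[OF A]
  have c: "cl ql qr > 0" "cr ql qr > 0" using rs_speed[OF A] by auto
  have us0: "us ql qr = 0" unfolding ustar_def Let_def u P by simp
  have hl: "hh ql > 0" "hh qr > 0" using A adm_h by auto
  have "1 / hls ql qr = 1 / hh ql" using st(5) us0 u by simp
  then have e1: "hls ql qr = hh ql" by simp
  have "1 / hrs ql qr = 1 / hh qr" using st(6) us0 u by simp
  then have e2: "hrs ql qr = hh qr" by simp
  have QL: "QL ql qr = ql"
    by (rule state_eq) (use sc e1 us0 u hl adm_comp[OF A(1)] in simp_all)
  have QR: "QR ql qr = qr"
    by (rule state_eq) (use sc e2 us0 u hl adm_comp[OF A(2)] in simp_all)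
  have S2: "S2 ql qr = 0" using us0 by (simp add: Sig2_def)
  show "Amin f ql qr = 0" "Apl f ql qr = 0" unfolding Amin_def Apl_def QL QR S2 by simp_all
qed

lemma steady:
  assumes S: "step_setting g eta lam dx dt q" and u: "\<forall>i. vel (q i) = 0"
    and P: "\<forall>i j. PP (q i) = PP (q j)"
  shows "scheme_step g eta lam dx dt q i = q i"
proof -
  have A: "admissible (q (i-1))" "admissible (q i)" "admissible (q (i+1))"
    using S unfolding step_setting_def by auto
  note z1 = steady_if[OF A(2,3)] and z2 = steady_if[OF A(1,2)]
  note sc = step_comp0[OF A, of "dt / dx i"]
  show ?thesis unfolding step_eq
    by (rule state_eq) (use sc z1 z2 u P in simp_all)
qed

lemma P_bound:
  assumes A: "admissible ql" "admissible qr"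
  shows "PP qr - PP ql \<le> (hh ql * aa ql + hh qr * aa qr) * (aa ql + aa qr)"
proof -
  have h: "hh ql > 0" "hh qr > 0" using A adm_h by auto
  have s: "sigxx ql > 0" "sigzz ql > 0" "sigxx qr > 0" "sigzz qr > 0" using A adm_sx adm_sz by auto
  have a: "aa ql > 0" "aa qr > 0" using A sound_pos by auto
  have r: "PP qr \<le> hh qr * aa qr ^ 2"
  proof -
    have "hh qr * aa qr ^ 2 - PP qr = g * hh qr ^ 2 / 2 + KK * hh qr * (2 * sigzz qr + 2 * sigxx qr)"
      unfolding sound_sq[OF A(2)] dPdh_def pres_def using lp by (simp add: field_simps power2_eq_square)
    moreover have "KK * hh qr * (2 * sigzz qr + 2 * sigxx qr) \<ge> 0"
      using KK_pos h s by (intro mult_nonneg_nonneg) auto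
    moreover have "g * hh qr ^ 2 / 2 \<ge> 0" using gp by simp
    ultimately show ?thesis by linarith
  qed
  have l: "- PP ql \<le> hh ql * aa ql ^ 2"
  proof -
    have "hh ql * aa ql ^ 2 + PP ql = 3 * g * hh ql ^ 2 / 2 + KK * hh ql * (4 * sigzz ql)"
      unfolding sound_sq[OF A(1)] dPdh_def pres_def using lp by (simp add: field_simps power2_eq_square)
    moreover have "KK * hh ql * (4 * sigzz ql) \<ge> 0" using KK_pos h s by (intro mult_nonneg_nonneg) auto
    moreover have "3 * g * hh ql ^ 2 / 2 \<ge> 0" using gp by simp
    ultimately show ?thesis by linarith
  qed
  have "hh qr * aa qr ^ 2 + hh ql * aa ql ^ 2 \<le> (hh ql * aa ql + hh qr * aa qr) * (aa ql + aa qr)"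
    using h a by (simp add: algebra_simps power2_eq_square)
  then show ?thesis using r l by linarith
qed

lemma c_bound:
  assumes A: "admissible ql" "admissible qr"
  shows "cl ql qr / hh ql \<le> aa ql + 2 * (\<bar>vel ql\<bar> + \<bar>vel qr\<bar>) + 2 * (aa ql + aa qr)"
    "cr ql qr / hh qr \<le> aa qr + 2 * (\<bar>vel ql\<bar> + \<bar>vel qr\<bar>) + 2 * (aa ql + aa qr)"
proof -
  have h: "hh ql > 0" "hh qr > 0" using A adm_h by auto
  have a: "aa ql > 0" "aa qr > 0" using A sound_pos by auto
  define E where "E = hh ql * aa ql + hh qr * aa qr"
  have E: "E > 0" using h a unfolding E_def by (simp add: add_pos_pos)
  have n: "0 \<le> (aa ql + aa qr) * E" using E a by simp
  have "PP qr - PP ql \<le> (aa ql + aa qr) * E" using P_bound[OF A] unfolding E_def by (simp add: algebra_simps)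
  then have "max 0 (PP qr - PP ql) \<le> (aa ql + aa qr) * E" using n by simp
  then have m1: "max 0 (PP qr - PP ql) / E \<le> aa ql + aa qr" using E by (simp add: pos_divide_le_eq)
  have "PP ql - PP qr \<le> (aa ql + aa qr) * E" using P_bound[OF A(2,1)] unfolding E_def by (simp add: algebra_simps)
  then have "max 0 (PP ql - PP qr) \<le> (aa ql + aa qr) * E" using n by simp
  then have m2: "max 0 (PP ql - PP qr) / E \<le> aa ql + aa qr" using E by (simp add: pos_divide_le_eq)
  have d: "max 0 (vel ql - vel qr) \<le> \<bar>vel ql\<bar> + \<bar>vel qr\<bar>" by auto
  have e1: "cl ql qr / hh ql = aa ql + 2*(max 0 (vel ql - vel qr) + max 0 (PP qr - PP ql) / E)"
    unfolding cL_def E_def using h by simp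
  have e2: "cr ql qr / hh qr = aa qr + 2*(max 0 (vel ql - vel qr) + max 0 (PP ql - PP qr) / E)"
    unfolding cR_def E_def using h by simp
  show "cl ql qr / hh ql \<le> aa ql + 2 * (\<bar>vel ql\<bar> + \<bar>vel qr\<bar>) + 2 * (aa ql + aa qr)"
    by (rule lin_helper[OF e1 m1 d])
  show "cr ql qr / hh qr \<le> aa qr + 2 * (\<bar>vel ql\<bar> + \<bar>vel qr\<bar>) + 2 * (aa ql + aa qr)"
    by (rule lin_helper[OF e2 m2 d])
qed

lemma amax_bound:
  assumes A: "admissible ql" "admissible qr"
  shows "Amax g eta lam ql qr \<le> 3 * (\<bar>vel ql\<bar> + \<bar>vel qr\<bar> + aa ql + aa qr)"
proof -
  note cb = c_bound[OF A]
  have h: "hh ql > 0" "hh qr > 0" using A adm_h by auto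
  have a: "aa ql > 0" "aa qr > 0" using A sound_pos by auto
  have cp: "cl ql qr / hh ql > 0" "cr ql qr / hh qr > 0" using rs_speed[OF A] h by auto
  have b1: "\<bar>S1 ql qr\<bar> \<le> 3 * (\<bar>vel ql\<bar> + \<bar>vel qr\<bar> + aa ql + aa qr)"
    unfolding Sig1_def by (rule abs_helper1[OF cp(1) cb(1) a])
  have b3: "\<bar>S3 ql qr\<bar> \<le> 3 * (\<bar>vel ql\<bar> + \<bar>vel qr\<bar> + aa ql + aa qr)"
    unfolding Sig3_def by (rule abs_helper3[OF cp(2) cb(2) a])
  obtain Z1 where Z1: "Z1 \<ge> 0" "cl ql qr = hh ql * (aa ql + 2*Z1)" "vel ql - us ql qr \<le> Z1"
    using rs_speed(5)[OF A] by blast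
  obtain Z2 where Z2: "Z2 \<ge> 0" "cr ql qr = hh qr * (aa qr + 2*Z2)" "us ql qr - vel qr \<le> Z2"
    using rs_speed(6)[OF A] by blast
  have "cl ql qr / hh ql = aa ql + 2*Z1" using Z1(2) h by simp
  then have z1: "Z1 \<le> \<bar>vel ql\<bar> + \<bar>vel qr\<bar> + aa ql + aa qr" using cb(1) a by (smt (verit))
  have "cr ql qr / hh qr = aa qr + 2*Z2" using Z2(2) h by simp
  then have z2: "Z2 \<le> \<bar>vel ql\<bar> + \<bar>vel qr\<bar> + aa ql + aa qr" using cb(2) a by (smt (verit))
  have b2: "\<bar>S2 ql qr\<bar> \<le> 3 * (\<bar>vel ql\<bar> + \<bar>vel qr\<bar> + aa ql + aa qr)"
    unfolding Sig2_def using Z1(3) Z2(3) z1 z2 a by (smt (verit))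
  show ?thesis unfolding Amax_def using b1 b2 b3 by simp
qed

abbreviation "K2 \<equiv> eta/(4*lam)"
abbreviation "EE \<equiv> energy g eta lam"

lemma support_state:
  assumes y: "admissible y" and m: "admissible m"
  shows "EE m + (g*hh m - vel m^2/2 - K2*(ln (sigxx m) + ln (sigzz m)))*(hh y - hh m) + vel m*(hu y - hu m)
    + K2*(1 - 1/sigxx m)*(hsxx y - hsxx m) + K2*(1 - 1/sigzz m)*(hszz y - hszz m) \<le> EE y"
  unfolding energy_def adm_comp[OF y] adm_comp[OF m]
  by (rule support) (use gp ep lp adm_h adm_sx adm_sz y m in auto)

lemma energy_jensen:
  assumes S: "step_setting g eta lam dx dt q"
  shows "EE (scheme_step g eta lam dx dt q i) \<le> (\<Sum>(w,y)\<leftarrow>wl (dt / dx i) (q (i-1)) (q i) (q (i+1)). w * EE y)"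
proof -
  note r = step_rep[OF S, of i]
  define N where "N = scheme_step g eta lam dx dt q i"
  define xs where "xs = wl (dt / dx i) (q (i-1)) (q i) (q (i+1))"
  have adN: "admissible N" unfolding N_def by (rule positivity[OF S])
  define b1 where "b1 = g*hh N - vel N^2/2 - K2*(ln (sigxx N) + ln (sigzz N))"
  define b2 where "b2 = vel N"
  define b3 where "b3 = K2*(1 - 1/sigxx N)"
  define b4 where "b4 = K2*(1 - 1/sigzz N)"
  define a where "a = EE N - b1 * hh N - b2 * hu N - b3 * hsxx N - b4 * hszz N"
  have tan: "a + b1 * hh y + b2 * hu y + b3 * hsxx y + b4 * hszz y \<le> EE y" if "(w,y) \<in> set xs" for w y
  proof -
    have ady: "admissible y" using r(1) that unfolding xs_def by auto
    have "a + b1 * hh y + b2 * hu y + b3 * hsxx y + b4 * hszz y =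
      EE N + b1*(hh y - hh N) + b2*(hu y - hu N) + b3*(hsxx y - hsxx N) + b4*(hszz y - hszz N)"
      unfolding a_def by (simp add: algebra_simps)
    also have "\<dots> \<le> EE y" unfolding b1_def b2_def b3_def b4_def by (rule support_state[OF ady adN])
    finally show ?thesis .
  qed
  have "(\<Sum>(w,y)\<leftarrow>xs. w * (a + b1 * hh y + b2 * hu y + b3 * hsxx y + b4 * hszz y)) \<le> (\<Sum>(w,y)\<leftarrow>xs. w * EE y)"
    using r(1) tan unfolding xs_def by (intro L_mono) auto
  moreover have "(\<Sum>(w,y)\<leftarrow>xs. w * (a + b1 * hh y + b2 * hu y + b3 * hsxx y + b4 * hszz y)) = EE N"
    unfolding L_lin using r(2-6) unfolding xs_def[symmetric] N_def[symmetric] a_def by simp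
  ultimately show ?thesis unfolding N_def xs_def by simp
qed

lemma same_state:
  assumes A: "admissible q"
  shows "QL q q = q" "QR q q = q"
proof -
  note st = rs_star[OF A A] and sc = star_comp[OF A A]
  have c: "cl q q > 0" "cr q q > 0" using rs_speed[OF A A] by auto
  have us0: "us q q = vel q" unfolding ustar_def Let_def using c
    by (simp add: field_simps)
  have hl: "hh q > 0" using A adm_h by auto
  have "1 / hls q q = 1 / hh q" using st(5) us0 by simp
  then have e1: "hls q q = hh q" by simp
  have "1 / hrs q q = 1 / hh q" using st(6) us0 by simp
  then have e2: "hrs q q = hh q" by simp
  show "QL q q = q"
    by (rule state_eq) (use sc e1 us0 hl adm_comp[OF A] in simp_all)
  show "QR q q = q"
    by (rule state_eq) (use sc e2 us0 hl adm_comp[OF A] in simp_all)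
qed

lemma Amin_same: "admissible q \<Longrightarrow> Amin f q q = 0"
  unfolding Amin_def using same_state by simp
lemma Apl_same: "admissible q \<Longrightarrow> Apl f q q = 0"
  unfolding Apl_def using same_state by simp

lemma star_energy:
  assumes A: "admissible ql" "admissible qr"
  shows "EE (QL ql qr) = hls ql qr * us ql qr^2/2 + g*hls ql qr^2/2 + K2*hls ql qr*(sigxx ql*(hh ql/hls ql qr)^2
      + sigzz ql*(hls ql qr/hh ql)^2 - ln (sigxx ql * sigzz ql) - 2)"
    "EE (QR ql qr) = hrs ql qr * (- us ql qr)^2/2 + g*hrs ql qr^2/2 + K2*hrs ql qr*(sigxx qr*(hh qr/hrs ql qr)^2
      + sigzz qr*(hrs ql qr/hh qr)^2 - ln (sigxx qr * sigzz qr) - 2)"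
proof -
  note sc = star_comp[OF A]
  have p: "hls ql qr > 0" "hrs ql qr > 0" using rs_star[OF A] by auto
  have h: "hh ql > 0" "hh qr > 0" using A adm_h by auto
  have m1: "sigxx ql*(hh ql/hls ql qr)^2 * (sigzz ql*(hls ql qr/hh ql)^2) = sigxx ql * sigzz ql"
    using p h by (simp add: field_simps power2_eq_square)
  have m2: "sigxx qr*(hh qr/hrs ql qr)^2 * (sigzz qr*(hrs ql qr/hh qr)^2) = sigxx qr * sigzz qr"
    using p h by (simp add: field_simps power2_eq_square)
  show "EE (QL ql qr) = hls ql qr * us ql qr^2/2 + g*hls ql qr^2/2 + K2*hls ql qr*(sigxx ql*(hh ql/hls ql qr)^2
      + sigzz ql*(hls ql qr/hh ql)^2 - ln (sigxx ql * sigzz ql) - 2)"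
    unfolding energy_def sc(1,5,6,7) m1 by simp
  show "EE (QR ql qr) = hrs ql qr * (- us ql qr)^2/2 + g*hrs ql qr^2/2 + K2*hrs ql qr*(sigxx qr*(hh qr/hrs ql qr)^2
      + sigzz qr*(hrs ql qr/hh qr)^2 - ln (sigxx qr * sigzz qr) - 2)"
    unfolding energy_def sc(9,13,14,15) m2 by simp
qed

lemma dissipation:
  assumes A: "admissible ql" "admissible qr"
  shows "energy_flux g eta lam qr - energy_flux g eta lam ql - (Amin EE ql qr + Apl EE ql qr) \<le> 0"
proof -
  note st = rs_star[OF A] and sc = star_comp[OF A] and sp = rs_speed[OF A]
  have h: "hh ql > 0" "hh qr > 0" using A adm_h by auto
  have s: "sigxx ql > 0" "sigzz ql > 0" "sigxx qr > 0" "sigzz qr > 0" using A adm_sx adm_sz by auto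
  have a: "aa ql > 0" "aa qr > 0" using A sound_pos by auto
  have K: "K2 > 0" using ep lp by simp
  have c: "cl ql qr > 0" "cr ql qr > 0" using sp by auto
  have a2: "aa ql ^2 = g * hh ql + 2*K2*(3* sigzz ql + sigxx ql)" "aa qr ^2 = g * hh qr + 2*K2*(3* sigzz qr + sigxx qr)"
    using sound_sq[OF A(1)] sound_sq[OF A(2)] unfolding dPdh_def by simp_all
  obtain Z1 where Z1: "Z1 \<ge> 0" "cl ql qr = hh ql * (aa ql + 2*Z1)" "vel ql - us ql qr \<le> Z1"
    using sp(5) by blast
  obtain Z2 where Z2: "Z2 \<ge> 0" "cr ql qr = hh qr * (aa qr + 2*Z2)" "us ql qr - vel qr \<le> Z2"
    using sp(6) by blast
  have hb1: "1 / hls ql qr \<ge> 1 / hh ql - Z1 / cl ql qr"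
  proof -
    have "- Z1 / cl ql qr \<le> (us ql qr - vel ql) / cl ql qr" using Z1(3) c by (intro divide_right_mono) auto
    then show ?thesis unfolding st(5) by simp
  qed
  have hb2: "1 / hrs ql qr \<ge> 1 / hh qr - Z2 / cr ql qr"
  proof -
    have "(us ql qr - vel qr) / cr ql qr \<le> Z2 / cr ql qr" using Z2(3) c by (intro divide_right_mono) auto
    then show ?thesis unfolding st(6) by simp
  qed
  have p: "hls ql qr > 0" "hrs ql qr > 0" using st by auto
  have P: "PP ql = g*hh ql^2/2 + 2*K2*hh ql*(sigzz ql - sigxx ql)"
    "PP qr = g*hh qr^2/2 + 2*K2*hh qr*(sigzz qr - sigxx qr)"
    unfolding pres_def by simp_all
  have M1: "g*(max (hh ql) (hls ql qr))^3 + 6*K2* sigzz ql*(max (hh ql) (hls ql qr))^4/hh ql^2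
      + 2*K2* sigxx ql*hh ql^2 \<le> cl ql qr ^2"
    by (rule speed_M[OF gp K h(1) p(1) a(1) Z1(1) s(1,2) Z1(2) hb1 a2(1)])
  have M3: "g*(max (hh qr) (hrs ql qr))^3 + 6*K2* sigzz qr*(max (hh qr) (hrs ql qr))^4/hh qr^2
      + 2*K2* sigxx qr*hh qr^2 \<le> cr ql qr ^2"
    by (rule speed_M[OF gp K h(2) p(2) a(2) Z2(1) s(3,4) Z2(2) hb2 a2(2)])
  have c1: "cl ql qr = hh ql * (vel ql - S1 ql qr)" using h by (simp add: Sig1_def)
  have c3: "cr ql qr = hh qr * (- vel qr - - S3 ql qr)" using h by (simp add: Sig3_def)
  have c2: "cl ql qr = hls ql qr * (us ql qr - S1 ql qr)" using st(9) by simp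
  have c4: "cr ql qr = hrs ql qr * (- us ql qr - - S3 ql qr)" using st(10) by simp
  have Eql: "EE ql = hh ql * vel ql^2/2 + g*hh ql^2/2 + K2*hh ql*(sigxx ql + sigzz ql - ln (sigxx ql * sigzz ql) - 2)"
    unfolding energy_def by simp
  have Eqr: "EE qr = hh qr * (- vel qr)^2/2 + g*hh qr^2/2 + K2*hh qr*(sigxx qr + sigzz qr - ln (sigxx qr * sigzz qr) - 2)"
    unfolding energy_def by simp
  have pl: "pis ql qr = PP ql - cl ql qr * (us ql qr - vel ql)" by (rule st(3))
  have pr: "pis ql qr = PP qr - cr ql qr * (- us ql qr - - vel qr)" using st(4) by (simp add: algebra_simps)
  have W1: "(EE (QL ql qr) + pis ql qr) * us ql qr - (EE ql + PP ql) * vel ql - S1 ql qr * (EE (QL ql qr) - EE ql) \<le> 0"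
    by (rule wave_diss2[OF gp K h(1) p(1) c(1) s(1,2) c1 c2 M1 star_energy(1)[OF A] Eql P(1) pl])
  have W3: "(EE (QR ql qr) + pis ql qr) * (- us ql qr) - (EE qr + PP qr) * (- vel qr) - (- S3 ql qr) * (EE (QR ql qr) - EE qr) \<le> 0"
    by (rule wave_diss2[OF gp K h(2) p(2) c(2) s(3,4) c3 c4 M3 star_energy(2)[OF A] Eqr P(2) pr])
  have mm: "\<And>x::real. min 0 x + max 0 x = x" by (simp add: min_def max_def)
  have sumA: "Amin EE ql qr + Apl EE ql qr = S1 ql qr * (EE (QL ql qr) - EE ql) + S2 ql qr * (EE (QR ql qr) - EE (QL ql qr))
      + S3 ql qr * (EE qr - EE (QR ql qr))"
  proof -
    have "Amin EE ql qr + Apl EE ql qr = (min 0 (S1 ql qr) + max 0 (S1 ql qr)) * (EE (QL ql qr) - EE ql)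
       + (min 0 (S2 ql qr) + max 0 (S2 ql qr)) * (EE (QR ql qr) - EE (QL ql qr))
       + (min 0 (S3 ql qr) + max 0 (S3 ql qr)) * (EE qr - EE (QR ql qr))"
      unfolding Amin_def Apl_def by (simp add: algebra_simps)
    then show ?thesis unfolding mm .
  qed
  have "energy_flux g eta lam qr - energy_flux g eta lam ql - (Amin EE ql qr + Apl EE ql qr)
     = ((EE (QL ql qr) + pis ql qr) * us ql qr - (EE ql + PP ql) * vel ql - S1 ql qr * (EE (QL ql qr) - EE ql))
     + ((EE (QR ql qr) + pis ql qr) * (- us ql qr) - (EE qr + PP qr) * (- vel qr) - (- S3 ql qr) * (EE (QR ql qr) - EE qr))"
    unfolding sumA energy_flux_def Sig2_def by (simp add: algebra_simps)
  then show ?thesis using W1 W3 by linarith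
qed

lemma energy_ineq:
  assumes S: "step_setting g eta lam dx dt q"
  shows "EE (scheme_step g eta lam dx dt q i) - EE (q i)
    + dt / dx i * ((energy_flux g eta lam (q i) + Amin EE (q i) (q (i+1)))
                 - (energy_flux g eta lam (q (i-1)) + Amin EE (q (i-1)) (q i))) \<le> 0"
proof -
  have A: "admissible (q (i-1))" "admissible (q i)" "admissible (q (i+1))"
    using S unfolding step_setting_def by auto
  note J = energy_jensen[OF S, of i]
  note t = cfl_t[OF S, of i]
  have D: "energy_flux g eta lam (q i) - energy_flux g eta lam (q (i-1)) - (Amin EE (q (i-1)) (q i) + Apl EE (q (i-1)) (q i)) \<le> 0"
    by (rule dissipation[OF A(1,2)])
  have "dt / dx i * (energy_flux g eta lam (q i) - energy_flux g eta lam (q (i-1)) - (Amin EE (q (i-1)) (q i) + Apl EE (q (i-1)) (q i))) \<le> 0"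
    by (rule mult_nonneg_nonpos[OF t(1) D])
  moreover have "EE (scheme_step g eta lam dx dt q i) - (EE (q i) - dt / dx i * (Amin EE (q i) (q (i+1)) + Apl EE (q (i-1)) (q i))) \<le> 0"
    using J unfolding wl_sum by simp
  moreover have "EE (scheme_step g eta lam dx dt q i) - EE (q i)
    + dt / dx i * ((energy_flux g eta lam (q i) + Amin EE (q i) (q (i+1)))
                 - (energy_flux g eta lam (q (i-1)) + Amin EE (q (i-1)) (q i)))
    = (EE (scheme_step g eta lam dx dt q i) - (EE (q i) - dt / dx i * (Amin EE (q i) (q (i+1)) + Apl EE (q (i-1)) (q i))))
     + dt / dx i * (energy_flux g eta lam (q i) - energy_flux g eta lam (q (i-1)) - (Amin EE (q (i-1)) (q i) + Apl EE (q (i-1)) (q i)))"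
    by (simp add: algebra_simps)
  ultimately show ?thesis by linarith
qed


lemma ic_hh[continuous_intros]: "isCont f x \<Longrightarrow> isCont (\<lambda>p. hh (f p)) x"
  unfolding hh_def by (rule isCont_fst)
lemma ic_hu[continuous_intros]: "isCont f x \<Longrightarrow> isCont (\<lambda>p. hu (f p)) x"
  unfolding hu_def by (intro isCont_fst isCont_snd)
lemma ic_hsxx[continuous_intros]: "isCont f x \<Longrightarrow> isCont (\<lambda>p. hsxx (f p)) x"
  unfolding hsxx_def by (intro isCont_fst isCont_snd)
lemma ic_hszz[continuous_intros]: "isCont f x \<Longrightarrow> isCont (\<lambda>p. hszz (f p)) x"
  unfolding hszz_def by (intro isCont_fst isCont_snd)
lemma ic_vel[continuous_intros]: "isCont f x \<Longrightarrow> hh (f x) \<noteq> 0 \<Longrightarrow> isCont (\<lambda>p. vel (f p)) x"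
  unfolding vel_def by (intro continuous_intros) auto
lemma ic_sigxx[continuous_intros]: "isCont f x \<Longrightarrow> hh (f x) \<noteq> 0 \<Longrightarrow> isCont (\<lambda>p. sigxx (f p)) x"
  unfolding sigxx_def by (intro continuous_intros) auto
lemma ic_sigzz[continuous_intros]: "isCont f x \<Longrightarrow> hh (f x) \<noteq> 0 \<Longrightarrow> isCont (\<lambda>p. sigzz (f p)) x"
  unfolding sigzz_def by (intro continuous_intros) auto
lemma ic_pres[continuous_intros]: "isCont f x \<Longrightarrow> hh (f x) \<noteq> 0 \<Longrightarrow> isCont (\<lambda>p. PP (f p)) x"
  unfolding pres_def by (intro continuous_intros) auto
lemma ic_sound[continuous_intros]: "isCont f x \<Longrightarrow> hh (f x) \<noteq> 0 \<Longrightarrow> isCont (\<lambda>p. aa (f p)) x"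
  unfolding sound_def dPdh_def by (intro continuous_intros) auto

lemma den_pos: "admissible ql \<Longrightarrow> admissible qr \<Longrightarrow> hh ql * aa ql + hh qr * aa qr > 0"
  using adm_h sound_pos by (simp add: add_pos_pos)

lemma ic_cl[continuous_intros]: "isCont f x \<Longrightarrow> isCont g' x \<Longrightarrow> admissible (f x) \<Longrightarrow> admissible (g' x)
  \<Longrightarrow> isCont (\<lambda>p. cl (f p) (g' p)) x"
  unfolding cL_def using den_pos[of "f x" "g' x"] adm_h[of "f x"] adm_h[of "g' x"]
  by (intro continuous_intros) auto
lemma ic_cr[continuous_intros]: "isCont f x \<Longrightarrow> isCont g' x \<Longrightarrow> admissible (f x) \<Longrightarrow> admissible (g' x)
  \<Longrightarrow> isCont (\<lambda>p. cr (f p) (g' p)) x"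
  unfolding cR_def using den_pos[of "f x" "g' x"] adm_h[of "f x"] adm_h[of "g' x"]
  by (intro continuous_intros) auto
lemma ic_us[continuous_intros]: "isCont f x \<Longrightarrow> isCont g' x \<Longrightarrow> admissible (f x) \<Longrightarrow> admissible (g' x)
  \<Longrightarrow> isCont (\<lambda>p. us (f p) (g' p)) x"
  unfolding ustar_def Let_def using rs_speed[of "f x" "g' x"] adm_h[of "f x"] adm_h[of "g' x"]
  by (intro continuous_intros) (auto simp: add_pos_pos)

lemma hls_den: assumes "admissible ql" "admissible qr"
  shows "1 / hh ql + (cr ql qr * (vel qr - vel ql) + PP ql - PP qr) / (cl ql qr * (cl ql qr + cr ql qr)) \<noteq> 0"
    "1 / hh qr + (cl ql qr * (vel qr - vel ql) + PP qr - PP ql) / (cr ql qr * (cl ql qr + cr ql qr)) \<noteq> 0"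
proof -
  have "hls ql qr > 0" "hrs ql qr > 0" using rs_star[OF assms] by auto
  then show "1 / hh ql + (cr ql qr * (vel qr - vel ql) + PP ql - PP qr) / (cl ql qr * (cl ql qr + cr ql qr)) \<noteq> 0"
    "1 / hh qr + (cl ql qr * (vel qr - vel ql) + PP qr - PP ql) / (cr ql qr * (cl ql qr + cr ql qr)) \<noteq> 0"
    unfolding hLstar_def hRstar_def Let_def by auto
qed

lemma ic_hls[continuous_intros]: "isCont f x \<Longrightarrow> isCont g' x \<Longrightarrow> admissible (f x) \<Longrightarrow> admissible (g' x)
  \<Longrightarrow> isCont (\<lambda>p. hls (f p) (g' p)) x"
  unfolding hLstar_def Let_def using rs_speed[of "f x" "g' x"] adm_h[of "f x"] adm_h[of "g' x"] hls_den[of "f x" "g' x"]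
  by (intro continuous_intros) (auto simp: add_pos_pos)
lemma ic_hrs[continuous_intros]: "isCont f x \<Longrightarrow> isCont g' x \<Longrightarrow> admissible (f x) \<Longrightarrow> admissible (g' x)
  \<Longrightarrow> isCont (\<lambda>p. hrs (f p) (g' p)) x"
  unfolding hRstar_def Let_def using rs_speed[of "f x" "g' x"] adm_h[of "f x"] adm_h[of "g' x"] hls_den[of "f x" "g' x"]
  by (intro continuous_intros) (auto simp: add_pos_pos)
lemma ic_S1[continuous_intros]: "isCont f x \<Longrightarrow> isCont g' x \<Longrightarrow> admissible (f x) \<Longrightarrow> admissible (g' x)
  \<Longrightarrow> isCont (\<lambda>p. S1 (f p) (g' p)) x"
  unfolding Sig1_def using adm_h[of "f x"] by (intro continuous_intros) auto
lemma ic_S2[continuous_intros]: "isCont f x \<Longrightarrow> isCont g' x \<Longrightarrow> admissible (f x) \<Longrightarrow> admissible (g' x)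
  \<Longrightarrow> isCont (\<lambda>p. S2 (f p) (g' p)) x"
  unfolding Sig2_def by (intro continuous_intros) auto
lemma ic_S3[continuous_intros]: "isCont f x \<Longrightarrow> isCont g' x \<Longrightarrow> admissible (f x) \<Longrightarrow> admissible (g' x)
  \<Longrightarrow> isCont (\<lambda>p. S3 (f p) (g' p)) x"
  unfolding Sig3_def using adm_h[of "g' x"] by (intro continuous_intros) auto

lemma same_vals: assumes A: "admissible q"
  shows "cl q q = hh q * aa q" "cr q q = hh q * aa q" "us q q = vel q" "hls q q = hh q" "hrs q q = hh q"
    "S1 q q = vel q - aa q" "S2 q q = vel q" "S3 q q = vel q + aa q"
proof -
  have h: "hh q > 0" "aa q > 0" using A adm_h sound_pos by auto
  show c1: "cl q q = hh q * aa q" "cr q q = hh q * aa q" unfolding cL_def cR_def by simp_all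
  show u: "us q q = vel q" unfolding ustar_def Let_def c1 using h by (simp add: field_simps)
  show "hls q q = hh q" unfolding hLstar_def Let_def c1 by simp
  show "hrs q q = hh q" unfolding hRstar_def Let_def c1 by simp
  show "S1 q q = vel q - aa q" "S2 q q = vel q" "S3 q q = vel q + aa q"
    unfolding Sig1_def Sig2_def Sig3_def c1 u using h by simp_all
qed

lemma sharp:
  assumes A: "admissible q"
  shows "((\<lambda>(ql, qr). S1 ql qr) \<longlongrightarrow> vel q - aa q) (at (q, q))"
    "((\<lambda>(ql, qr). S2 ql qr) \<longlongrightarrow> vel q) (at (q, q))"
    "((\<lambda>(ql, qr). S3 ql qr) \<longlongrightarrow> vel q + aa q) (at (q, q))"
proof -
  have f: "isCont fst (q,q)" "isCont snd (q,q)" by (simp_all add: continuous_fst continuous_snd continuous_ident)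
  have c: "isCont (\<lambda>p. S1 (fst p) (snd p)) (q,q)" "isCont (\<lambda>p. S2 (fst p) (snd p)) (q,q)"
    "isCont (\<lambda>p. S3 (fst p) (snd p)) (q,q)"
    using A by (auto intro!: ic_S1 ic_S2 ic_S3 f)
  have e: "(\<lambda>(ql, qr). S1 ql qr) = (\<lambda>p. S1 (fst p) (snd p))" "(\<lambda>(ql, qr). S2 ql qr) = (\<lambda>p. S2 (fst p) (snd p))"
     "(\<lambda>(ql, qr). S3 ql qr) = (\<lambda>p. S3 (fst p) (snd p))" by auto
  show "((\<lambda>(ql, qr). S1 ql qr) \<longlongrightarrow> vel q - aa q) (at (q, q))"
    using c(1) unfolding e isCont_def by (simp add: same_vals[OF A])
  show "((\<lambda>(ql, qr). S2 ql qr) \<longlongrightarrow> vel q) (at (q, q))"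
    using c(2) unfolding e isCont_def by (simp add: same_vals[OF A])
  show "((\<lambda>(ql, qr). S3 ql qr) \<longlongrightarrow> vel q + aa q) (at (q, q))"
    using c(3) unfolding e isCont_def by (simp add: same_vals[OF A])
qed

lemma flux_diff:
  assumes A: "admissible ql" "admissible qr"
  defines "rl \<equiv> hh ql / hls ql qr" and "rr \<equiv> hh qr / hrs ql qr"
  shows "fluxRw hsxx g eta lam ql qr - fluxLw hsxx g eta lam ql qr
      = hsxx ql * (us ql qr - vel ql) * (1 + rl) + hsxx qr * (vel qr - us ql qr) * (1 + rr)"
    "fluxRw hszz g eta lam ql qr - fluxLw hszz g eta lam ql qr
      = - hszz ql * (us ql qr - vel ql) * (1 + rl) / rl^2 - hszz qr * (vel qr - us ql qr) * (1 + rr) / rr^2"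
proof -
  note st = rs_star[OF A] and sc = star_comp[OF A]
  have h: "hh ql > 0" "hh qr > 0" using A adm_h by auto
  have p: "hls ql qr > 0" "hrs ql qr > 0" using st by auto
  have c: "cl ql qr > 0" "cr ql qr > 0" using rs_speed[OF A] by auto
  have e1: "hh ql * (vel ql - S1 ql qr) = cl ql qr" using h by (simp add: Sig1_def)
  have e3: "hh qr * (S3 ql qr - vel qr) = cr ql qr" using h by (simp add: Sig3_def)
  have e2: "hls ql qr * (us ql qr - S1 ql qr) = cl ql qr" by (rule st(9))
  have e4: "hrs ql qr * (S3 ql qr - us ql qr) = cr ql qr" by (rule st(10))
  note G = fd_gen[OF e1 e2 e3 e4]
  have rl: "cl ql qr * (rl - 1) = hh ql * (us ql qr - vel ql)"
  proof -
    have "rl = hh ql * (1 / hls ql qr)" unfolding rl_def by simp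
    also have "\<dots> = 1 + hh ql * (us ql qr - vel ql) / cl ql qr" unfolding st(5) using h by (simp add: field_simps)
    finally show ?thesis using c by (simp add: field_simps)
  qed
  have rr: "cr ql qr * (rr - 1) = hh qr * (vel qr - us ql qr)"
  proof -
    have "rr = hh qr * (1 / hrs ql qr)" unfolding rr_def by simp
    also have "\<dots> = 1 - hh qr * (us ql qr - vel qr) / cr ql qr" unfolding st(6) using h by (simp add: field_simps)
    finally show ?thesis using c by (simp add: field_simps)
  qed
  have rp: "rl > 0" "rr > 0" unfolding rl_def rr_def using h p by auto
  have wx: "hsxx ql = hh ql * sigxx ql" "hsxx qr = hh qr * sigxx qr" using adm_comp A by auto
  have wz: "hszz ql = hh ql * sigzz ql" "hszz qr = hh qr * sigzz qr" using adm_comp A by auto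
  have "fluxRw hsxx g eta lam ql qr - fluxLw hsxx g eta lam ql qr
      = cl ql qr * (sigxx ql * (hh ql / hls ql qr)^2 - sigxx ql) + cr ql qr * (sigxx qr * (hh qr / hrs ql qr)^2 - sigxx qr)"
    unfolding flux_rep(5,6)[OF A] Amin_def Apl_def Sig2_def[symmetric] sc(3,11) wx
    using G[of "sigxx qr" "sigxx ql * (hh ql / hls ql qr)^2" "sigxx ql" "sigxx qr * (hh qr / hrs ql qr)^2"]
    unfolding Sig2_def by (simp add: algebra_simps)
  also have "\<dots> = sigxx ql * (rl + 1) * (cl ql qr * (rl - 1)) + sigxx qr * (rr + 1) * (cr ql qr * (rr - 1))"
    unfolding rl_def rr_def using h p by (simp add: field_simps power2_eq_square)
  also have "\<dots> = hsxx ql * (us ql qr - vel ql) * (1 + rl) + hsxx qr * (vel qr - us ql qr) * (1 + rr)"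
    unfolding rl rr wx by (simp add: algebra_simps)
  finally show "fluxRw hsxx g eta lam ql qr - fluxLw hsxx g eta lam ql qr
      = hsxx ql * (us ql qr - vel ql) * (1 + rl) + hsxx qr * (vel qr - us ql qr) * (1 + rr)" .
  have "fluxRw hszz g eta lam ql qr - fluxLw hszz g eta lam ql qr
      = cl ql qr * (sigzz ql * (hls ql qr / hh ql)^2 - sigzz ql) + cr ql qr * (sigzz qr * (hrs ql qr / hh qr)^2 - sigzz qr)"
    unfolding flux_rep(5,6)[OF A] Amin_def Apl_def Sig2_def[symmetric] sc(4,12) wz
    using G[of "sigzz qr" "sigzz ql * (hls ql qr / hh ql)^2" "sigzz ql" "sigzz qr * (hrs ql qr / hh qr)^2"]
    unfolding Sig2_def by (simp add: algebra_simps)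
  also have "\<dots> = - sigzz ql * (rl + 1) * (cl ql qr * (rl - 1)) / rl^2 - sigzz qr * (rr + 1) * (cr ql qr * (rr - 1)) / rr^2"
    unfolding rl_def rr_def using h p by (simp add: field_simps power2_eq_square)
  also have "\<dots> = - hszz ql * (us ql qr - vel ql) * (1 + rl) / rl^2 - hszz qr * (vel qr - us ql qr) * (1 + rr) / rr^2"
    unfolding rl rr wz by (simp add: algebra_simps)
  finally show "fluxRw hszz g eta lam ql qr - fluxLw hszz g eta lam ql qr
      = - hszz ql * (us ql qr - vel ql) * (1 + rl) / rl^2 - hszz qr * (vel qr - us ql qr) * (1 + rr) / rr^2" .
qed

lemma adm_iff: "admissible y \<longleftrightarrow> hh y > 0 \<and> hsxx y > 0 \<and> hszz y > 0"
  unfolding admissible_def sigxx_def sigzz_def by (auto simp: zero_less_divide_iff)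

lemma P_alt: "admissible y \<Longrightarrow> PP y = g * hh y^2/2 + KK * (hszz y - hsxx y)"
  unfolding pres_def using adm_comp[of y] lp by (simp add: field_simps)

lemma consistency:
  assumes A: "admissible q"
  shows "((\<lambda>(ql, qr). (1 / norm (qr - ql)) *\<^sub>R
            (fluxR g eta lam ql qr - fluxL g eta lam ql qr + ncB q (qr - ql))) \<longlongrightarrow> 0) (at (q, q))"
proof -
  define H where "H = hh q"
  define U where "U = vel q"
  define W where "W = hsxx q"
  define Zq where "Zq = hszz q"
  have H: "H > 0" unfolding H_def using A adm_h by auto
  define rl where "rl = (\<lambda>p::state\<times>state. hh (fst p) / hls (fst p) (snd p))"
  define rr where "rr = (\<lambda>p::state\<times>state. hh (snd p) / hrs (fst p) (snd p))"
  define k1 where "k1 = (\<lambda>p::state\<times>state. hsxx (fst p) * (1 + rl p))"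
  define k2 where "k2 = (\<lambda>p::state\<times>state. hsxx (snd p) * (1 + rr p))"
  define m1 where "m1 = (\<lambda>p::state\<times>state. - hszz (fst p) * (1 + rl p) / (rl p)^2)"
  define m2 where "m2 = (\<lambda>p::state\<times>state. - hszz (snd p) * (1 + rr p) / (rr p)^2)"
  define fa where "fa = (\<lambda>p::state\<times>state. cr (fst p) (snd p) / (cl (fst p) (snd p) + cr (fst p) (snd p)))"
  define fb where "fb = (\<lambda>p::state\<times>state. 1 / (cl (fst p) (snd p) + cr (fst p) (snd p)))"
  define vh where "vh = (\<lambda>p::state\<times>state. - vel (fst p) / hh (snd p))"
  define vhu where "vhu = (\<lambda>p::state\<times>state. 1 / hh (snd p))"
  define qh where "qh = (\<lambda>p::state\<times>state. - (g/2) * (hh (fst p) + hh (snd p)))"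
  define a1h where "a1h = (\<lambda>p::state\<times>state. fa p * vh p + fb p * qh p)"
  define a1hu where "a1hu = (\<lambda>p::state\<times>state. fa p * vhu p)"
  define a1X where "a1X = (\<lambda>p::state\<times>state. fb p * KK)"
  define a1Z where "a1Z = (\<lambda>p::state\<times>state. - fb p * KK)"
  define C3h where "C3h = (\<lambda>p::state\<times>state. k1 p * a1h p + k2 p * (vh p - a1h p) + 2*W*U/H)"
  define C3hu where "C3hu = (\<lambda>p::state\<times>state. k1 p * a1hu p + k2 p * (vhu p - a1hu p) - 2*W/H)"
  define C3X where "C3X = (\<lambda>p::state\<times>state. k1 p * a1X p + k2 p * (- a1X p))"
  define C3Z where "C3Z = (\<lambda>p::state\<times>state. k1 p * a1Z p + k2 p * (- a1Z p))"
  define C4h where "C4h = (\<lambda>p::state\<times>state. m1 p * a1h p + m2 p * (vh p - a1h p) - 2*Zq*U/H)"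
  define C4hu where "C4hu = (\<lambda>p::state\<times>state. m1 p * a1hu p + m2 p * (vhu p - a1hu p) + 2*Zq/H)"
  define C4X where "C4X = (\<lambda>p::state\<times>state. m1 p * a1X p + m2 p * (- a1X p))"
  define C4Z where "C4Z = (\<lambda>p::state\<times>state. m1 p * a1Z p + m2 p * (- a1Z p))"
  define dh where "dh = (\<lambda>p::state\<times>state. hh (snd p) - hh (fst p))"
  define dhu where "dhu = (\<lambda>p::state\<times>state. hu (snd p) - hu (fst p))"
  define dX where "dX = (\<lambda>p::state\<times>state. hsxx (snd p) - hsxx (fst p))"
  define dZ where "dZ = (\<lambda>p::state\<times>state. hszz (snd p) - hszz (fst p))"
  define n where "n = (\<lambda>p::state\<times>state. norm (snd p - fst p))"
  have alg: "fluxRw hsxx g eta lam (fst p) (snd p) - fluxLw hsxx g eta lam (fst p) (snd p) + - 2 * W * ((dhu p - U * dh p) / H)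
      = C3h p * dh p + C3hu p * dhu p + C3X p * dX p + C3Z p * dZ p"
    "fluxRw hszz g eta lam (fst p) (snd p) - fluxLw hszz g eta lam (fst p) (snd p) + 2 * Zq * ((dhu p - U * dh p) / H)
      = C4h p * dh p + C4hu p * dhu p + C4X p * dX p + C4Z p * dZ p"
    if ad: "admissible (fst p)" "admissible (snd p)" for p :: "state \<times> state"
  proof -
    obtain ql qr where p: "p = (ql, qr)" by (cases p) auto
    have a: "admissible ql" "admissible qr" using ad p by auto
    have h: "hh ql > 0" "hh qr > 0" using a adm_h by auto
    have c: "cl ql qr + cr ql qr > 0" using rs_speed[OF a] by auto
    have V: "vel qr - vel ql = vh p * dh p + vhu p * dhu p"
      unfolding vh_def vhu_def dh_def dhu_def p using h adm_comp(3)[OF a(1)] adm_comp(3)[OF a(2)]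
      by (simp add: field_simps)
    have Q: "PP ql - PP qr = qh p * dh p + KK * dX p - KK * dZ p"
      unfolding qh_def dh_def dX_def dZ_def p P_alt[OF a(1)] P_alt[OF a(2)] using lp
      by (simp add: field_simps power2_eq_square)
    have A1: "us ql qr - vel ql = a1h p * dh p + a1hu p * dhu p + a1X p * dX p + a1Z p * dZ p"
    proof -
      have fa: "fa p = cr ql qr / (cl ql qr + cr ql qr)" unfolding fa_def p by simp
      have fb: "fb p = 1 / (cl ql qr + cr ql qr)" unfolding fb_def p by simp
      have "us ql qr - vel ql = (cr ql qr * (vel qr - vel ql) + (PP ql - PP qr)) / (cl ql qr + cr ql qr)"
        using rs_star(1)[OF a] by (simp add: algebra_simps)
      also have "\<dots> = cr ql qr / (cl ql qr + cr ql qr) * (vel qr - vel ql) + 1 / (cl ql qr + cr ql qr) * (PP ql - PP qr)"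
        by (simp add: add_divide_distrib)
      finally have "us ql qr - vel ql = fa p * (vel qr - vel ql) + fb p * (PP ql - PP qr)" unfolding fa fb .
      then show ?thesis unfolding V Q a1h_def a1hu_def a1X_def a1Z_def by (simp add: algebra_simps)
    qed
    have A2: "vel qr - us ql qr = (vh p - a1h p) * dh p + (vhu p - a1hu p) * dhu p + (- a1X p) * dX p + (- a1Z p) * dZ p"
      using V A1 by (simp add: algebra_simps)
    note fd = flux_diff[OF a]
    have rl': "rl p = hh ql / hls ql qr" "rr p = hh qr / hrs ql qr" unfolding rl_def rr_def p by simp_all
    show "fluxRw hsxx g eta lam (fst p) (snd p) - fluxLw hsxx g eta lam (fst p) (snd p) + - 2 * W * ((dhu p - U * dh p) / H)
      = C3h p * dh p + C3hu p * dhu p + C3X p * dX p + C3Z p * dZ p"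
    proof -
      have "fluxRw hsxx g eta lam (fst p) (snd p) - fluxLw hsxx g eta lam (fst p) (snd p)
          = k1 p * (us ql qr - vel ql) + k2 p * (vel qr - us ql qr)"
        unfolding p fst_conv snd_conv fd(1) k1_def k2_def rl_def rr_def
        by (simp add: mult_ac)
      then have fl: "fluxRw hsxx g eta lam (fst p) (snd p) - fluxLw hsxx g eta lam (fst p) (snd p)
          = k1 p * (a1h p * dh p + a1hu p * dhu p + a1X p * dX p + a1Z p * dZ p)
           + k2 p * ((vh p - a1h p) * dh p + (vhu p - a1hu p) * dhu p + (- a1X p) * dX p + (- a1Z p) * dZ p)"
        unfolding A1 A2 .
      show ?thesis unfolding fl C3h_def C3hu_def C3X_def C3Z_def using H
        by (simp add: field_simps)
    qed
    show "fluxRw hszz g eta lam (fst p) (snd p) - fluxLw hszz g eta lam (fst p) (snd p) + 2 * Zq * ((dhu p - U * dh p) / H)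
      = C4h p * dh p + C4hu p * dhu p + C4X p * dX p + C4Z p * dZ p"
    proof -
      have "fluxRw hszz g eta lam (fst p) (snd p) - fluxLw hszz g eta lam (fst p) (snd p)
          = m1 p * (us ql qr - vel ql) + m2 p * (vel qr - us ql qr)"
        unfolding p fst_conv snd_conv fd(2) m1_def m2_def rl_def rr_def
        by (simp add: mult_ac)
      then have fl: "fluxRw hszz g eta lam (fst p) (snd p) - fluxLw hszz g eta lam (fst p) (snd p)
          = m1 p * (a1h p * dh p + a1hu p * dhu p + a1X p * dX p + a1Z p * dZ p)
           + m2 p * ((vh p - a1h p) * dh p + (vhu p - a1hu p) * dhu p + (- a1X p) * dX p + (- a1Z p) * dZ p)"
        unfolding A1 A2 .
      show ?thesis unfolding fl C4h_def C4hu_def C4X_def C4Z_def using H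
        by (simp add: field_simps)
    qed
  qed
  have p0: "rl (q,q) = 1" "rr (q,q) = 1" unfolding rl_def rr_def using same_vals[OF A] H unfolding H_def by simp_all
  have cc: "cl q q + cr q q > 0" using rs_speed[OF A A] by auto
  have hq: "hh q \<noteq> 0" using H unfolding H_def by simp
  have hls0: "hls q q \<noteq> 0" "hrs q q \<noteq> 0" using same_vals[OF A] hq by simp_all
  note sv = same_vals[OF A]
  have icr: "isCont rl (q,q)" "isCont rr (q,q)" unfolding rl_def rr_def using A hls0
    by (auto intro!: continuous_intros)
  have ick: "isCont k1 (q,q)" "isCont k2 (q,q)" "isCont m1 (q,q)" "isCont m2 (q,q)"
    unfolding k1_def k2_def m1_def m2_def using A icr p0
    by (auto intro!: continuous_intros)
  have ica: "isCont fa (q,q)" "isCont fb (q,q)" "isCont vh (q,q)" "isCont vhu (q,q)" "isCont qh (q,q)"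
    unfolding fa_def fb_def vh_def vhu_def qh_def using A cc hq
    by (auto intro!: continuous_intros)
  have ica2: "isCont a1h (q,q)" "isCont a1hu (q,q)" "isCont a1X (q,q)" "isCont a1Z (q,q)"
    unfolding a1h_def a1hu_def a1X_def a1Z_def using ica lp by (auto intro!: continuous_intros)
  have icC: "isCont C3h (q,q)" "isCont C3hu (q,q)" "isCont C3X (q,q)" "isCont C3Z (q,q)"
    "isCont C4h (q,q)" "isCont C4hu (q,q)" "isCont C4X (q,q)" "isCont C4Z (q,q)"
    unfolding C3h_def C3hu_def C3X_def C3Z_def C4h_def C4hu_def C4X_def C4Z_def using ica ica2 ick
    by (auto intro!: continuous_intros)
  have kv: "k1 (q,q) = 2*W" "k2 (q,q) = 2*W" "m1 (q,q) = -2*Zq" "m2 (q,q) = -2*Zq"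
    unfolding k1_def k2_def m1_def m2_def W_def Zq_def using p0 by simp_all
  have vv: "vh (q,q) = - U/H" "vhu (q,q) = 1/H" unfolding vh_def vhu_def U_def H_def by simp_all
  have Cv: "C3h (q,q) = 0" "C3hu (q,q) = 0" "C3X (q,q) = 0" "C3Z (q,q) = 0"
    "C4h (q,q) = 0" "C4hu (q,q) = 0" "C4X (q,q) = 0" "C4Z (q,q) = 0"
    unfolding C3h_def C3hu_def C3X_def C3Z_def C4h_def C4hu_def C4X_def C4Z_def kv vv
    by (simp_all add: algebra_simps)
  have Clim: "(C3h \<longlongrightarrow> 0) (at (q,q))" "(C3hu \<longlongrightarrow> 0) (at (q,q))" "(C3X \<longlongrightarrow> 0) (at (q,q))" "(C3Z \<longlongrightarrow> 0) (at (q,q))"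
    "(C4h \<longlongrightarrow> 0) (at (q,q))" "(C4hu \<longlongrightarrow> 0) (at (q,q))" "(C4X \<longlongrightarrow> 0) (at (q,q))" "(C4Z \<longlongrightarrow> 0) (at (q,q))"
    using icC Cv unfolding isCont_def by auto
  have db: "\<And>p. \<bar>dh p\<bar> \<le> n p" "\<And>p. \<bar>dhu p\<bar> \<le> n p" "\<And>p. \<bar>dX p\<bar> \<le> n p" "\<And>p. \<bar>dZ p\<bar> \<le> n p"
    unfolding dh_def dhu_def dX_def dZ_def n_def comp_diff[symmetric] by (rule comp_le)+
  have L3: "((\<lambda>p. (1 / n p) * (C3h p * dh p + C3hu p * dhu p + C3X p * dX p + C3Z p * dZ p)) \<longlongrightarrow> 0) (at (q,q))"
    by (rule lim_lin[OF Clim(1-4) db])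
  have L4: "((\<lambda>p. (1 / n p) * (C4h p * dh p + C4hu p * dhu p + C4X p * dX p + C4Z p * dZ p)) \<longlongrightarrow> 0) (at (q,q))"
    by (rule lim_lin[OF Clim(5-8) db])
  have LV: "((\<lambda>p. (0::real, 0::real, (1 / n p) * (C3h p * dh p + C3hu p * dhu p + C3X p * dX p + C3Z p * dZ p),
       (1 / n p) * (C4h p * dh p + C4hu p * dhu p + C4X p * dX p + C4Z p * dZ p))) \<longlongrightarrow> (0, 0, 0, 0)) (at (q,q))"
    by (intro tendsto_Pair tendsto_const L3 L4)
  have ev1: "eventually (\<lambda>p. 0 < f p) (at (q,q))" if "isCont f (q,q)" "f (q,q) > 0" for f :: "state \<times> state \<Rightarrow> real"
    using that by (intro order_tendstoD(1)) (auto simp: isCont_def)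
  have ic6: "isCont (\<lambda>p::state\<times>state. hh (fst p)) (q,q)" "isCont (\<lambda>p::state\<times>state. hsxx (fst p)) (q,q)"
    "isCont (\<lambda>p::state\<times>state. hszz (fst p)) (q,q)" "isCont (\<lambda>p::state\<times>state. hh (snd p)) (q,q)"
    "isCont (\<lambda>p::state\<times>state. hsxx (snd p)) (q,q)" "isCont (\<lambda>p::state\<times>state. hszz (snd p)) (q,q)"
    by (auto intro!: continuous_intros)
  have qpos: "hh q > 0" "hsxx q > 0" "hszz q > 0" using A adm_iff by auto
  have ev: "eventually (\<lambda>p::state\<times>state. admissible (fst p) \<and> admissible (snd p)) (at (q,q))"
  proof -
    have "eventually (\<lambda>p::state\<times>state. (0 < hh (fst p) \<and> 0 < hsxx (fst p) \<and> 0 < hszz (fst p)) \<and>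
        (0 < hh (snd p) \<and> 0 < hsxx (snd p) \<and> 0 < hszz (snd p))) (at (q,q))"
      using qpos by (intro eventually_conj ev1 ic6) simp_all
    then show ?thesis by (rule eventually_mono) (simp add: adm_iff)
  qed
  have eqv: "(case p of (ql, qr) \<Rightarrow> (1 / norm (qr - ql)) *\<^sub>R
            (fluxR g eta lam ql qr - fluxL g eta lam ql qr + ncB q (qr - ql)))
      = (0, 0, (1 / n p) * (C3h p * dh p + C3hu p * dhu p + C3X p * dX p + C3Z p * dZ p),
         (1 / n p) * (C4h p * dh p + C4hu p * dhu p + C4X p * dX p + C4Z p * dZ p))"
    if ad: "admissible (fst p) \<and> admissible (snd p)" for p :: "state \<times> state"
  proof -
    obtain ql qr where p: "p = (ql, qr)" by (cases p) auto
    have "fluxR g eta lam ql qr - fluxL g eta lam ql qr + ncB q (qr - ql)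
      = (0, 0, fluxRw hsxx g eta lam (fst p) (snd p) - fluxLw hsxx g eta lam (fst p) (snd p) + - 2 * W * ((dhu p - U * dh p) / H),
         fluxRw hszz g eta lam (fst p) (snd p) - fluxLw hszz g eta lam (fst p) (snd p) + 2 * Zq * ((dhu p - U * dh p) / H))"
      unfolding p fluxL_def fluxR_def ncB_def Let_def dhu_def dh_def W_def Zq_def U_def H_def comp_diff
      by simp
    also have "\<dots> = (0, 0, C3h p * dh p + C3hu p * dhu p + C3X p * dX p + C3Z p * dZ p,
                      C4h p * dh p + C4hu p * dhu p + C4X p * dX p + C4Z p * dZ p)"
      using alg ad by simp
    finally show ?thesis unfolding p n_def by simp
  qed
  have "((\<lambda>(ql, qr). (1 / norm (qr - ql)) *\<^sub>R
            (fluxR g eta lam ql qr - fluxL g eta lam ql qr + ncB q (qr - ql))) \<longlongrightarrow> (0, 0, 0, 0)) (at (q, q))"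
    by (rule tendsto_cong[THEN iffD2, OF eventually_mono[OF ev eqv] LV])
  then show ?thesis by (simp add: zero_prod_def)
qed

end


theorem theorem1:
  fixes g eta lam :: real
  assumes "g > 0" and "eta > 0" and "lam > 0"
  shows
    \<comment> \<open>(i) consistency\<close>
    "(\<forall>q. admissible q \<longrightarrow>
        fluxL g eta lam q q = phys_flux g eta lam q \<and>
        fluxR g eta lam q q = phys_flux g eta lam q \<and>
        ((\<lambda>(ql, qr). (1 / norm (qr - ql)) *\<^sub>R
            (fluxR g eta lam ql qr - fluxL g eta lam ql qr + ncB q (qr - ql)))
          \<longlongrightarrow> 0) (at (q, q)))
   \<and> \<comment> \<open>(ii) positivity\<close>
    (\<forall>dx dt qn. step_setting g eta lam dx dt qn \<longrightarrow>
        (\<forall>i. admissible (scheme_step g eta lam dx dt qn i)))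
   \<and> \<comment> \<open>(iii) conservativity in h and hu\<close>
    (\<forall>ql qr. admissible ql \<longrightarrow> admissible qr \<longrightarrow>
        hh (fluxL g eta lam ql qr) = hh (fluxR g eta lam ql qr) \<and>
        hu (fluxL g eta lam ql qr) = hu (fluxR g eta lam ql qr))
   \<and> \<comment> \<open>(iv) discrete energy inequality\<close>
    (\<exists>G :: state \<Rightarrow> state \<Rightarrow> real.
        (\<forall>q. admissible q \<longrightarrow> G q q = energy_flux g eta lam q) \<and>
        (\<forall>dx dt qn. step_setting g eta lam dx dt qn \<longrightarrow>
           (\<forall>i. energy g eta lam (scheme_step g eta lam dx dt qn i) - energy g eta lam (qn i)
                + dt / dx i * (G (qn i) (qn (i + 1)) - G (qn (i - 1)) (qn i)) \<le> 0)))
   \<and> \<comment> \<open>(v) maximum principle on s_xx, minimum principle on s_zz\<close>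
    (\<forall>dx dt qn k. step_setting g eta lam dx dt qn \<longrightarrow> k > 0 \<longrightarrow>
        ((\<forall>i. s_xx (qn i) \<le> k) \<longrightarrow> (\<forall>i. s_xx (scheme_step g eta lam dx dt qn i) \<le> k)) \<and>
        ((\<forall>i. s_zz (qn i) \<ge> k) \<longrightarrow> (\<forall>i. s_zz (scheme_step g eta lam dx dt qn i) \<ge> k)))
   \<and> \<comment> \<open>(vi) steady contact discontinuities are exactly resolved\<close>
    (\<forall>dx dt qn. step_setting g eta lam dx dt qn \<longrightarrow>
        (\<forall>i. vel (qn i) = 0) \<longrightarrow> (\<forall>i j. pres g eta lam (qn i) = pres g eta lam (qn j)) \<longrightarrow>
        (\<forall>i. scheme_step g eta lam dx dt qn i = qn i))
   \<and> \<comment> \<open>(vii) finite propagation speed, with an absolute constant C\<close>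
    (\<exists>C :: real. \<forall>g' eta' lam'. g' > 0 \<longrightarrow> eta' > 0 \<longrightarrow> lam' > 0 \<longrightarrow>
        (\<forall>ql qr. admissible ql \<longrightarrow> admissible qr \<longrightarrow>
           Amax g' eta' lam' ql qr \<le> C * (\<bar>vel ql\<bar> + \<bar>vel qr\<bar>
              + sound g' eta' lam' ql + sound g' eta' lam' qr)))
   \<and> \<comment> \<open>(viii) sharp numerical viscosity\<close>
    (\<forall>q. admissible q \<longrightarrow>
        ((\<lambda>(ql, qr). Sig1 g eta lam ql qr) \<longlongrightarrow> vel q - sound g eta lam q) (at (q, q)) \<and>
        ((\<lambda>(ql, qr). Sig2 g eta lam ql qr) \<longlongrightarrow> vel q) (at (q, q)) \<and>
        ((\<lambda>(ql, qr). Sig3 g eta lam ql qr) \<longlongrightarrow> vel q + sound g eta lam q) (at (q, q)))"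
proof -
  interpret pp g eta lam using assms by unfold_locales
  have i: "\<forall>q. admissible q \<longrightarrow>
        fluxL g eta lam q q = phys_flux g eta lam q \<and>
        fluxR g eta lam q q = phys_flux g eta lam q \<and>
        ((\<lambda>(ql, qr). (1 / norm (qr - ql)) *\<^sub>R
            (fluxR g eta lam ql qr - fluxL g eta lam ql qr + ncB q (qr - ql)))
          \<longlongrightarrow> 0) (at (q, q))"
  proof (intro allI impI conjI)
    fix q assume A: "admissible q"
    note fr = flux_rep[OF A A]
    show "fluxL g eta lam q q = phys_flux g eta lam q"
      unfolding fluxL_def phys_flux_def fr(1) fr(3) fr(5) Amin_same[OF A] by simp
    show "fluxR g eta lam q q = phys_flux g eta lam q"
      unfolding fluxR_def phys_flux_def fr(2) fr(4) fr(6) Apl_same[OF A] by simp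
    show "((\<lambda>(ql, qr). (1 / norm (qr - ql)) *\<^sub>R
            (fluxR g eta lam ql qr - fluxL g eta lam ql qr + ncB q (qr - ql))) \<longlongrightarrow> 0) (at (q, q))"
      by (rule consistency[OF A])
  qed
  have ii: "\<forall>dx dt qn. step_setting g eta lam dx dt qn \<longrightarrow>
        (\<forall>i. admissible (scheme_step g eta lam dx dt qn i))"
    using positivity by blast
  have iii: "\<forall>ql qr. admissible ql \<longrightarrow> admissible qr \<longrightarrow>
        hh (fluxL g eta lam ql qr) = hh (fluxR g eta lam ql qr) \<and>
        hu (fluxL g eta lam ql qr) = hu (fluxR g eta lam ql qr)"
    by (simp add: fluxL_def fluxR_def hh_def hu_def)
  have iv: "\<exists>G :: state \<Rightarrow> state \<Rightarrow> real.
        (\<forall>q. admissible q \<longrightarrow> G q q = energy_flux g eta lam q) \<and>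
        (\<forall>dx dt qn. step_setting g eta lam dx dt qn \<longrightarrow>
           (\<forall>i. energy g eta lam (scheme_step g eta lam dx dt qn i) - energy g eta lam (qn i)
                + dt / dx i * (G (qn i) (qn (i + 1)) - G (qn (i - 1)) (qn i)) \<le> 0))"
    apply (rule exI[of _ "\<lambda>ql qr. energy_flux g eta lam ql + Amin (energy g eta lam) ql qr"])
    using Amin_same energy_ineq by auto
  have v: "\<forall>dx dt qn k. step_setting g eta lam dx dt qn \<longrightarrow> k > 0 \<longrightarrow>
        ((\<forall>i. s_xx (qn i) \<le> k) \<longrightarrow> (\<forall>i. s_xx (scheme_step g eta lam dx dt qn i) \<le> k)) \<and>
        ((\<forall>i. s_zz (qn i) \<ge> k) \<longrightarrow> (\<forall>i. s_zz (scheme_step g eta lam dx dt qn i) \<ge> k))"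
    using max_principle min_principle by blast
  have vi: "\<forall>dx dt qn. step_setting g eta lam dx dt qn \<longrightarrow>
        (\<forall>i. vel (qn i) = 0) \<longrightarrow> (\<forall>i j. pres g eta lam (qn i) = pres g eta lam (qn j)) \<longrightarrow>
        (\<forall>i. scheme_step g eta lam dx dt qn i = qn i)"
    using steady by blast
  have vii: "\<exists>C :: real. \<forall>g' eta' lam'. g' > 0 \<longrightarrow> eta' > 0 \<longrightarrow> lam' > 0 \<longrightarrow>
        (\<forall>ql qr. admissible ql \<longrightarrow> admissible qr \<longrightarrow>
           Amax g' eta' lam' ql qr \<le> C * (\<bar>vel ql\<bar> + \<bar>vel qr\<bar>
              + sound g' eta' lam' ql + sound g' eta' lam' qr))"
  proof (rule exI[of _ 3], intro allI impI)
    fix g' eta' lam' :: real and ql qr :: state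
    assume "g' > 0" "eta' > 0" "lam' > 0" "admissible ql" "admissible qr"
    then show "Amax g' eta' lam' ql qr \<le> 3 * (\<bar>vel ql\<bar> + \<bar>vel qr\<bar>
              + sound g' eta' lam' ql + sound g' eta' lam' qr)"
      using pp.amax_bound[of g' eta' lam' ql qr] by (simp add: pp_def)
  qed
  have viii: "\<forall>q. admissible q \<longrightarrow>
        ((\<lambda>(ql, qr). Sig1 g eta lam ql qr) \<longlongrightarrow> vel q - sound g eta lam q) (at (q, q)) \<and>
        ((\<lambda>(ql, qr). Sig2 g eta lam ql qr) \<longlongrightarrow> vel q) (at (q, q)) \<and>
        ((\<lambda>(ql, qr). Sig3 g eta lam ql qr) \<longlongrightarrow> vel q + sound g eta lam q) (at (q, q))"
    using sharp by blast
  show ?thesis using i ii iii iv v vi vii viii by blast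
qed


end
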